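(* Let $(\mathbf X_1,\mathbf Y_1)$ and $(\mathbf X_2,\mathbf Y_2)$ be general correlated sources, both uniformly integrable, with identical marginals $\mathbf X_1=\mathbf X_2$ (i.e. $P_{X_1^n}=P_{X_2^n}$ for all $n$), and let $(\mathbf X,\mathbf Y)$ be their mixture $P_{X^nY^n}=\alpha_1P_{X_1^nY_1^n}+\alpha_2P_{X_2^nY_2^n}$ with $\alpha_1,\alpha_2>0$, $\alpha_1+\alpha_2=1$. Then \[\overline H_s(\mathbf X|\mathbf Y)=\lim_{\varepsilon\downarrow0}\limsup_{n\to\infty}\frac1n\sum_{x^n\in\mathcal X^n}P_{X^n}(x^n)\Big[\max_{i=1,2}\overline h_i^\varepsilon(x^n)\Big].\]
   Context: A general correlated source $\{(X^n,Y^n)\}_{n\ge1}$ is an arbitrary sequence of pairs of random variables on $\mathcal X^n\times\mathcal Y^n$, $\mathcal X,\mathcal Y$ finite or countably infinite (no structural assumptions; marginal probabilities positive). Logs base 2. A source is uniformly integrable if $Z_n=\frac1n\log\frac1{P_{X^n|Y^n}(X^n|Y^n)}$ satisfies $\lim_{u\to\infty}\sup_n\sum_{z:|z|\ge u}P_{Z_n}(z)|z|=0$. For a source with distributions $P_{X^nY^n}$, $x^n$ and $\varepsilon\in(0,1]$: $\overline h^\varepsilon(x^n|P_{X^nY^n})=\inf\{a\in\mathbb R:\sum_{y^n:\log(1/P_{X^n|Y^n}(x^n|y^n))>a}P_{Y^n|X^n}(y^n|x^n)\le\varepsilon\}$; $\overline h_i^\varepsilon(x^n)=\overline h^\varepsilon(x^n|P_{X_i^nY_i^n})$;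 $\overline H_s^\varepsilon(X^n|Y^n)=\sum_{x^n}P_{X^n}(x^n)\overline h^\varepsilon(x^n|P_{X^nY^n})$; $\overline H_s(\mathbf X|\mathbf Y)=\lim_{\varepsilon\downarrow0}\limsup_n\frac1n\overline H_s^\varepsilon(X^n|Y^n)$. *)

theory Defs
  imports "HOL-Probability.Probability"
begin

text \<open>A general correlated source: for each n a joint pmf on X^n x Y^n,
  where X^n, Y^n are the length-n lists over countable alphabets (types).\<close>

definition is_source :: "(nat \<Rightarrow> ('x::countable list \<times> 'y::countable list) pmf) \<Rightarrow> bool" where
  "is_source P \<longleftrightarrow> (\<forall>n. set_pmf (P n) \<subseteq> {(xs, ys). length xs = n \<and> length ys = n}
      \<and> (\<forall>xs. length xs = n \<longrightarrow> pmf (map_pmf fst (P n)) xs > 0)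
      \<and> (\<forall>ys. length ys = n \<longrightarrow> pmf (map_pmf snd (P n)) ys > 0))"

definition condXY :: "('x \<times> 'y) pmf \<Rightarrow> 'x \<Rightarrow> 'y \<Rightarrow> real" where
  "condXY Q x y = pmf Q (x, y) / pmf (map_pmf snd Q) y"

definition condYX :: "('x \<times> 'y) pmf \<Rightarrow> 'y \<Rightarrow> 'x \<Rightarrow> real" where
  "condYX Q y x = pmf Q (x, y) / pmf (map_pmf fst Q) x"

definition Zdist :: "(nat \<Rightarrow> ('x \<times> 'y) pmf) \<Rightarrow> nat \<Rightarrow> real pmf" where
  "Zdist P n = map_pmf (\<lambda>(x, y). (1 / real n) * log 2 (1 / condXY (P n) x y)) (P n)"

definition unif_integrable :: "(nat \<Rightarrow> ('x \<times> 'y) pmf) \<Rightarrow> bool" where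
  "unif_integrable P \<longleftrightarrow>
     ((\<lambda>u::real. SUP n\<in>{1..}. (\<Sum>\<^sub>\<infinity> z\<in>{z. \<bar>z\<bar> \<ge> u}. ennreal (pmf (Zdist P n) z * \<bar>z\<bar>)))
        \<longlongrightarrow> 0) at_top"

definition hbar :: "real \<Rightarrow> ('x \<times> 'y) pmf \<Rightarrow> 'x \<Rightarrow> real" where
  "hbar \<epsilon> Q x = Inf {a::real.
      (\<Sum>\<^sub>\<infinity> y. if log 2 (1 / condXY Q x y) > a then condYX Q y x else 0) \<le> \<epsilon>}"

definition Hs_eps :: "real \<Rightarrow> (nat \<Rightarrow> ('x list \<times> 'y) pmf) \<Rightarrow> nat \<Rightarrow> real" where
  "Hs_eps \<epsilon> P n = (\<Sum>\<^sub>\<infinity> x\<in>{xs. length xs = n}. pmf (map_pmf fst (P n)) x * hbar \<epsilon> (P n) x)"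

definition Hs :: "(nat \<Rightarrow> ('x list \<times> 'y) pmf) \<Rightarrow> ereal" where
  "Hs P = Lim (at_right (0::real)) (\<lambda>\<epsilon>. limsup (\<lambda>n. ereal (Hs_eps \<epsilon> P n / real n)))"

end

theory Submission
  imports Defs "HOL-Real_Asymp.Real_Asymp"
begin

lemma pmf_le_snd: "pmf M (x,y) \<le> pmf (map_pmf snd M) y"
proof -
  have "pmf M (x,y) = measure M {(x,y)}" by (simp add: measure_pmf_single)
  also have "\<dots> \<le> measure M (snd -` {y})"
    by (intro measure_pmf.finite_measure_mono) auto
  finally show ?thesis by (simp add: pmf_map)
qed

lemma pmf_le_fst: "pmf M (x,y) \<le> pmf (map_pmf fst M) x"
proof -
  have "pmf M (x,y) = measure M {(x,y)}" by (simp add: measure_pmf_single)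
  also have "\<dots> \<le> measure M (fst -` {x})"
    by (intro measure_pmf.finite_measure_mono) auto
  finally show ?thesis by (simp add: pmf_map)
qed

lemma mix_nn_integral:
  assumes "\<And>z. pmf R z = a1 * pmf R1 z + a2 * pmf R2 z" "a1 \<ge> 0" "a2 \<ge> 0"
  shows "(\<integral>\<^sup>+z. f z \<partial>R) = ennreal a1 * (\<integral>\<^sup>+z. f z \<partial>R1) + ennreal a2 * (\<integral>\<^sup>+z. f z \<partial>R2)"
proof -
  have "(\<integral>\<^sup>+z. f z \<partial>R) = (\<integral>\<^sup>+z. ennreal a1 * (ennreal (pmf R1 z) * f z) + ennreal a2 * (ennreal (pmf R2 z) * f z) \<partial>count_space UNIV)"
    unfolding nn_integral_measure_pmf
    by (intro nn_integral_cong) (simp add: assms ennreal_plus ennreal_mult distrib_right mult.assoc)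
  also have "\<dots> = ennreal a1 * (\<integral>\<^sup>+z. f z \<partial>R1) + ennreal a2 * (\<integral>\<^sup>+z. f z \<partial>R2)"
    unfolding nn_integral_measure_pmf
    by (subst nn_integral_add) (auto simp: nn_integral_cmult)
  finally show ?thesis .
qed

lemma mix_measure:
  assumes "\<And>z. pmf R z = a1 * pmf R1 z + a2 * pmf R2 z" "a1 \<ge> 0" "a2 \<ge> 0"
  shows "measure R A = a1 * measure R1 A + a2 * measure R2 A"
proof -
  have "ennreal (measure R A) = ennreal a1 * ennreal (measure R1 A) + ennreal a2 * ennreal (measure R2 A)"
    using mix_nn_integral[OF assms, of "indicator A"]
    by (simp add: measure_pmf.emeasure_eq_measure[symmetric])
  also have "\<dots> = ennreal (a1 * measure R1 A + a2 * measure R2 A)"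
    using assms by (simp add: ennreal_plus ennreal_mult)
  finally have "ennreal (measure R A) = ennreal (a1 * measure R1 A + a2 * measure R2 A)" .
  then show ?thesis
    by (subst (asm) ennreal_inj) (auto simp: assms)
qed

lemma mix_map:
  assumes "\<And>z. pmf R z = a1 * pmf R1 z + a2 * pmf R2 z" "a1 \<ge> 0" "a2 \<ge> 0"
  shows "pmf (map_pmf f R) y = a1 * pmf (map_pmf f R1) y + a2 * pmf (map_pmf f R2) y"
  by (simp add: pmf_map mix_measure[OF assms])

lemma log2_le: "z > 0 \<Longrightarrow> log 2 z \<le> z / ln 2"
proof -
  assume z: "z > 0"
  have "ln z \<le> z - 1" using z by (rule ln_le_minus_one)
  then have "ln z \<le> z" by simp
  then show ?thesis unfolding log_def by (simp add: divide_right_mono)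
qed

definition cnd :: "('a \<times> 'b) pmf \<Rightarrow> 'a \<Rightarrow> 'b pmf" where
  "cnd R x = map_pmf snd (cond_pmf R ({x} \<times> UNIV))"

lemma pmf_cnd:
  assumes "pmf (map_pmf fst R) x > 0"
  shows "pmf (cnd R x) y = pmf R (x,y) / pmf (map_pmf fst R) x"
proof -
  have ne: "set_pmf R \<inter> ({x} \<times> UNIV) \<noteq> {}"
  proof -
    from assms have "x \<in> set_pmf (map_pmf fst R)"
      unfolding set_pmf_iff by linarith
    then have "x \<in> fst ` set_pmf R" by simp
    then obtain y' where "(x,y') \<in> set_pmf R" by force
    then show ?thesis by blast
  qed
  have mx: "measure R ({x} \<times> UNIV) = pmf (map_pmf fst R) x"
  proof -
    have "measure R ({x} \<times> UNIV) = measure R (fst -` {x})"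
      by (rule arg_cong[where f="measure_pmf.prob R"]) auto
    then show ?thesis by (simp add: pmf_map)
  qed
  let ?C = "cond_pmf R ({x} \<times> UNIV)"
  show ?thesis
  proof (cases "(x,y) \<in> set_pmf R")
    case True
    have "pmf (map_pmf snd ?C) (snd (x,y)) = pmf ?C (x,y)"
      by (rule pmf_map_inj) (use ne True in \<open>auto simp: inj_on_def\<close>)
    then show ?thesis using ne by (simp add: cnd_def pmf_cond mx)
  next
    case False
    then have "y \<notin> set_pmf (map_pmf snd ?C)" using ne by auto
    then have "pmf (cnd R x) y = 0" unfolding cnd_def by (meson set_pmf_iff)
    moreover have "pmf R (x,y) = 0" using False by (simp add: set_pmf_iff)
    ultimately show ?thesis by simp
  qed
qed

lemma infsum_if_pmf: "(\<Sum>\<^sub>\<infinity> y. if P y then pmf M y else 0) = measure M {y. P y}"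
proof -
  have "measure M {y. P y} = infsetsum (pmf M) {y. P y}" by (rule measure_pmf_conv_infsetsum)
  also have "\<dots> = infsum (pmf M) {y. P y}" by (rule infsetsum_infsum) auto
  also have "\<dots> = (\<Sum>\<^sub>\<infinity> y. if P y then pmf M y else 0)"
    by (rule infsum_cong_neutral) auto
  finally show ?thesis by simp
qed



lemma tower:
  "(\<integral>\<^sup>+x. (\<integral>\<^sup>+y. g x y \<partial>cnd R x) \<partial>map_pmf fst R) = (\<integral>\<^sup>+z. g (fst z) (snd z) \<partial>R)"
proof -
  have "(\<integral>\<^sup>+x. (\<integral>\<^sup>+y. g x y \<partial>cnd R x) \<partial>map_pmf fst R)
      = (\<integral>\<^sup>+x. (\<integral>\<^sup>+y. ennreal (pmf R (x,y)) * g x y \<partial>count_space UNIV) \<partial>count_space UNIV)"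
    unfolding nn_integral_measure_pmf[of "map_pmf fst R"]
  proof (rule nn_integral_cong)
    fix x
    show "ennreal (pmf (map_pmf fst R) x) * (\<integral>\<^sup>+y. g x y \<partial>cnd R x)
       = (\<integral>\<^sup>+y. ennreal (pmf R (x,y)) * g x y \<partial>count_space UNIV)"
    proof (cases "pmf (map_pmf fst R) x > 0")
      case True
      show ?thesis unfolding nn_integral_measure_pmf
      proof (subst nn_integral_cmult[symmetric])
        show "(\<integral>\<^sup>+ y. ennreal (pmf (map_pmf fst R) x) * (ennreal (pmf (cnd R x) y) * g x y) \<partial>count_space UNIV) =
    (\<integral>\<^sup>+ y. ennreal (pmf R (x, y)) * g x y \<partial>count_space UNIV)"
        proof (rule nn_integral_cong)
          fix y
          have "pmf (map_pmf fst R) x * pmf (cnd R x) y = pmf R (x,y)"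
            using True by (simp add: pmf_cnd)
          then show "ennreal (pmf (map_pmf fst R) x) * (ennreal (pmf (cnd R x) y) * g x y) = ennreal (pmf R (x, y)) * g x y"
            by (metis ennreal_mult' mult.assoc pmf_nonneg)
        qed
      qed simp
    next
      case False
      then have "pmf (map_pmf fst R) x = 0" using pmf_nonneg[of "map_pmf fst R" x] by linarith
      moreover have z: "pmf R (x,y) = 0" for y using pmf_le_fst[of R x y] pmf_nonneg[of R "(x,y)"] \<open>pmf (map_pmf fst R) x = 0\<close> by linarith
      ultimately show ?thesis by (simp add: z)
    qed
  qed
  also have "\<dots> = (\<integral>\<^sup>+z. ennreal (pmf R z) * g (fst z) (snd z) \<partial>count_space UNIV)"
    using nn_integral_fst_count_space[of "\<lambda>z. ennreal (pmf R z) * g (fst z) (snd z)"] by simp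
  also have "\<dots> = (\<integral>\<^sup>+z. g (fst z) (snd z) \<partial>R)"
    by (simp add: nn_integral_measure_pmf)
  finally show ?thesis .
qed

definition FF :: "('a \<times> 'b) pmf \<Rightarrow> 'a \<Rightarrow> 'b \<Rightarrow> real" where
  "FF Q x y = log 2 (1 / condXY Q x y)"

definition tail :: "('a \<times> 'b) pmf \<Rightarrow> 'a \<Rightarrow> real \<Rightarrow> real" where
  "tail Q x a = measure (cnd Q x) {y. FF Q x y > a}"

lemma condYX_cnd: "pmf (map_pmf fst Q) x > 0 \<Longrightarrow> condYX Q y x = pmf (cnd Q x) y"
  by (simp add: condYX_def pmf_cnd)

lemma hbar_tail: assumes px: "pmf (map_pmf fst Q) x > 0" shows "hbar \<epsilon> Q x = Inf {a. tail Q x a \<le> \<epsilon>}"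
proof -
  have eq: "(\<Sum>\<^sub>\<infinity> y. if log 2 (1 / condXY Q x y) > a then condYX Q y x else 0) = tail Q x a" for a
    unfolding tail_def FF_def condYX_cnd[OF px] by (rule infsum_if_pmf)
  show ?thesis unfolding hbar_def eq ..
qed

lemma FF_nonneg:
  assumes "pmf Q (x,y) > 0" shows "FF Q x y \<ge> 0"
proof -
  have "pmf Q (x,y) \<le> pmf (map_pmf snd Q) y" by (rule pmf_le_snd)
  then have "1 \<le> 1 / condXY Q x y" using assms by (simp add: condXY_def)
  moreover have "0 < 1 / condXY Q x y" using \<open>1 \<le> 1 / condXY Q x y\<close> by linarith
  ultimately show ?thesis unfolding FF_def by (simp add: zero_le_log_cancel_iff)
qed

lemma FF_eq: "pmf Q (x,y) > 0 \<Longrightarrow> FF Q x y = log 2 (pmf (map_pmf snd Q) y) - log 2 (pmf Q (x,y))"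
proof -
  assume a: "pmf Q (x,y) > 0"
  then have "pmf (map_pmf snd Q) y > 0" using pmf_le_snd[of Q x y] by linarith
  then show ?thesis using a unfolding FF_def condXY_def by (simp add: log_divide)
qed

lemma tail_mono: "a \<le> b \<Longrightarrow> tail Q x b \<le> tail Q x a"
  unfolding tail_def by (auto intro!: measure_pmf.finite_measure_mono)

lemma in_set_cnd: "pmf (map_pmf fst Q) x > 0 \<Longrightarrow> y \<in> set_pmf (cnd Q x) \<Longrightarrow> pmf Q (x,y) > 0"
  by (simp add: set_pmf_iff pmf_cnd)

lemma tail_neg: assumes "pmf (map_pmf fst Q) x > 0" "a < 0" shows "tail Q x a = 1"
proof -
  have "set_pmf (cnd Q x) \<subseteq> {y. FF Q x y > a}"
    using FF_nonneg in_set_cnd[OF assms(1)] assms(2) by fastforce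
  then have "measure (cnd Q x) (set_pmf (cnd Q x)) \<le> tail Q x a"
    unfolding tail_def by (auto intro!: measure_pmf.finite_measure_mono)
  moreover have "measure (cnd Q x) (set_pmf (cnd Q x)) = 1"
    using measure_Int_set_pmf[of "cnd Q x" UNIV] by simp
  ultimately have "1 \<le> tail Q x a" by simp
  moreover have "tail Q x a \<le> 1" unfolding tail_def by simp
  ultimately show ?thesis by simp
qed

lemma tail_lim: "(\<lambda>k. tail Q x (real k)) \<longlonglongrightarrow> 0"
proof -
  have "(\<lambda>k. measure (cnd Q x) {y. FF Q x y > real k}) \<longlonglongrightarrow> measure (cnd Q x) (\<Inter>k. {y. FF Q x y > real k})"
    by (intro measure_pmf.finite_Lim_measure_decseq) (auto simp: decseq_def)
  moreover have "(\<Inter>k. {y. FF Q x y > real k}) = {}"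
  proof -
    have "\<not> (\<forall>k. FF Q x y > real k)" for y
    proof -
      obtain n where "FF Q x y < real n" using reals_Archimedean2 by blast
      then show ?thesis by (auto intro!: exI[of _ n])
    qed
    then show ?thesis by auto
  qed
  ultimately show ?thesis unfolding tail_def by simp
qed

lemma markov_pmf:
  fixes M :: "'a pmf"
  assumes fin: "(\<integral>\<^sup>+ y. ennreal (f y) \<partial>M) \<noteq> \<infinity>" and a: "a > 0"
  shows "a * measure M {y. a \<le> f y} \<le> enn2real (\<integral>\<^sup>+ y. ennreal (f y) \<partial>M)"
proof -
  have "ennreal (a * measure M {y. a \<le> f y}) = (\<integral>\<^sup>+ y. ennreal a * indicator {y. a \<le> f y} y \<partial>M)"
    using a by (subst nn_integral_cmult_indicator) (auto simp: ennreal_mult measure_pmf.emeasure_eq_measure)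
  also have "\<dots> \<le> (\<integral>\<^sup>+ y. ennreal (f y) \<partial>M)"
    by (intro nn_integral_mono) (auto simp: indicator_def intro: ennreal_leI)
  finally have "ennreal (a * measure M {y. a \<le> f y}) \<le> (\<integral>\<^sup>+ y. ennreal (f y) \<partial>M)" .
  then have "enn2real (ennreal (a * measure M {y. a \<le> f y})) \<le> enn2real (\<integral>\<^sup>+ y. ennreal (f y) \<partial>M)"
    using fin by (intro enn2real_mono) (auto simp: less_top)
  then show ?thesis using a by simp
qed

locale hsetup =
  fixes Q :: "('a \<times> 'b) pmf" and x :: 'a and \<epsilon> :: real
  assumes px: "pmf (map_pmf fst Q) x > 0" and eps: "0 < \<epsilon>" "\<epsilon> < 1"
begin

definition "S = {a. tail Q x a \<le> \<epsilon>}"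

lemma S_nonneg: "a \<in> S \<Longrightarrow> a \<ge> 0"
  using tail_neg[OF px, of a] eps by (force simp: S_def)

lemma S_ne: "S \<noteq> {}"
proof -
  from tail_lim[of Q x] eps obtain k where "tail Q x (real k) < \<epsilon>"
    by (metis (no_types, lifting) eventually_sequentially order_tendstoD(2) order_refl)
  then show ?thesis by (auto simp: S_def intro!: exI[of _ "real k"])
qed

lemma bdd: "bdd_below S"
  using S_nonneg by (auto simp: bdd_below_def)

lemma hb: "hbar \<epsilon> Q x = Inf S"
  using hbar_tail[OF px] by (simp add: S_def)

lemma hbar_le: "tail Q x a \<le> \<epsilon> \<Longrightarrow> hbar \<epsilon> Q x \<le> a"
  unfolding hb by (rule cInf_lower[OF _ bdd]) (simp add: S_def)

lemma hbar_ge: assumes "tail Q x a > \<epsilon>" shows "a \<le> hbar \<epsilon> Q x"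
  unfolding hb
proof (rule cInf_greatest[OF S_ne])
  fix s assume "s \<in> S"
  show "a \<le> s"
  proof (rule ccontr)
    assume "\<not> a \<le> s"
    then have "tail Q x a \<le> tail Q x s" by (intro tail_mono) simp
    with \<open>s \<in> S\<close> assms show False by (simp add: S_def)
  qed
qed

lemma hbar_nonneg: "hbar \<epsilon> Q x \<ge> 0"
  unfolding hb by (rule cInf_greatest[OF S_ne]) (rule S_nonneg)

lemma tail_gt: assumes "hbar \<epsilon> Q x < a" shows "tail Q x a \<le> \<epsilon>"
proof -
  from assms obtain s where "s \<in> S" "s < a" unfolding hb using cInf_less_iff[OF S_ne bdd] by auto
  then show ?thesis using tail_mono[of s a Q x] by (simp add: S_def)
qed

lemma hbar_markov:
  "ennreal (hbar \<epsilon> Q x) \<le> (\<integral>\<^sup>+ y. ennreal (FF Q x y) \<partial>cnd Q x) / ennreal \<epsilon> + 1"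
proof (cases "(\<integral>\<^sup>+ y. ennreal (FF Q x y) \<partial>cnd Q x) = \<infinity>")
  case True
  then show ?thesis using eps by (simp add: ennreal_top_divide)
next
  case False
  define e where "e = enn2real (\<integral>\<^sup>+ y. ennreal (FF Q x y) \<partial>cnd Q x)"
  have e0: "e \<ge> 0" by (simp add: e_def)
  have Ee: "(\<integral>\<^sup>+ y. ennreal (FF Q x y) \<partial>cnd Q x) = ennreal e"
    using False by (simp add: e_def less_top ennreal_enn2real)
  define a where "a = e / \<epsilon> + 1"
  have a0: "a > 0" using e0 eps by (simp add: a_def add_nonneg_pos)
  have "a * measure (cnd Q x) {y. a \<le> FF Q x y} \<le> e"
    using markov_pmf[OF False a0] by (simp add: e_def)
  moreover have "tail Q x a \<le> measure (cnd Q x) {y. a \<le> FF Q x y}"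
    unfolding tail_def by (auto intro!: measure_pmf.finite_measure_mono)
  ultimately have "a * tail Q x a \<le> e"
    using a0 by (meson mult_left_mono order_trans less_imp_le)
  then have "tail Q x a \<le> e / a" using a0 by (simp add: field_simps)
  also have "e / a \<le> \<epsilon>"
    using a0 eps e0 by (simp add: a_def field_simps)
  finally have "hbar \<epsilon> Q x \<le> a" by (rule hbar_le)
  then have "ennreal (hbar \<epsilon> Q x) \<le> ennreal a" by (rule ennreal_leI)
  also have "ennreal a = ennreal e / ennreal \<epsilon> + 1"
    using e0 eps by (simp add: a_def divide_ennreal ennreal_plus)
  finally show ?thesis using Ee by simp
qed

end

lemma hbar_anti:
  assumes px: "pmf (map_pmf fst Q) x > 0" and "0 < \<epsilon>" "\<epsilon> \<le> \<epsilon>'" "\<epsilon>' < 1"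
  shows "hbar \<epsilon>' Q x \<le> hbar \<epsilon> Q x"
proof -
  interpret A: hsetup Q x \<epsilon> using assms by unfold_locales auto
  interpret B: hsetup Q x \<epsilon>' using assms by unfold_locales auto
  show ?thesis
  proof (rule field_le_epsilon)
    fix d :: real assume "d > 0"
    then have "tail Q x (hbar \<epsilon> Q x + d) \<le> \<epsilon>" by (intro A.tail_gt) simp
    then show "hbar \<epsilon>' Q x \<le> hbar \<epsilon> Q x + d" using assms by (intro B.hbar_le) simp
  qed
qed

lemma pmf_ratio:
  fixes M N :: "'a pmf"
  assumes t: "t > 0"
  shows "measure M {y. pmf N y > t * pmf M y} \<le> 1 / t"
proof -
  let ?S = "{y. pmf N y > t * pmf M y}"
  have "ennreal (t * measure M ?S) = (\<integral>\<^sup>+ y. ennreal t * (ennreal (pmf M y) * indicator ?S y) \<partial>count_space UNIV)"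
    using t by (simp add: nn_integral_cmult ennreal_mult nn_integral_measure_pmf[symmetric]
        measure_pmf.emeasure_eq_measure)
  also have "\<dots> \<le> (\<integral>\<^sup>+ y. ennreal (pmf N y) \<partial>count_space UNIV)"
    using t by (intro nn_integral_mono) (auto simp: indicator_def ennreal_mult[symmetric] intro!: ennreal_leI)
  also have "\<dots> = 1" by (simp add: nn_integral_pmf)
  finally have "t * measure M ?S \<le> 1"
    by (simp add: ennreal_le_1 del: ennreal_1)
  then show ?thesis using t by (simp add: field_simps)
qed

lemma sumconv:
  fixes M :: "'a pmf"
  assumes nn: "\<And>x. pmf M x > 0 \<Longrightarrow> h x \<ge> 0" and out: "\<And>x. x \<notin> A \<Longrightarrow> pmf M x = 0"
    and fin: "(\<integral>\<^sup>+ x. ennreal (h x) \<partial>M) \<noteq> \<infinity>"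
  shows "(\<Sum>\<^sub>\<infinity> x\<in>A. pmf M x * h x) = enn2real (\<integral>\<^sup>+ x. ennreal (h x) \<partial>M)"
proof -
  define g where "g x = pmf M x * h x" for x
  have g0: "g x \<ge> 0" for x
  proof (cases "pmf M x > 0")
    case True then show ?thesis using nn[OF True] by (simp add: g_def)
  next
    case False then have "pmf M x = 0" using pmf_nonneg[of M x] by linarith
    then show ?thesis by (simp add: g_def)
  qed
  have eq: "(\<integral>\<^sup>+ x. ennreal (h x) \<partial>M) = (\<integral>\<^sup>+ x. ennreal (g x) \<partial>count_space UNIV)"
    unfolding nn_integral_measure_pmf
  proof (rule nn_integral_cong)
    fix x
    show "ennreal (pmf M x) * ennreal (h x) = ennreal (g x)"
    proof (cases "pmf M x > 0")
      case True then show ?thesis using nn[OF True] by (simp add: g_def ennreal_mult)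
    next
      case False then have "pmf M x = 0" using pmf_nonneg[of M x] by linarith
      then show ?thesis by (simp add: g_def)
    qed
  qed
  have int: "integrable (count_space UNIV) g"
    using fin g0 unfolding eq by (intro integrableI_nonneg) (auto simp: less_top)
  have "infsetsum g UNIV = enn2real (\<integral>\<^sup>+ x. ennreal (g x) \<partial>count_space UNIV)"
    unfolding infsetsum_def using g0 by (intro integral_eq_nn_integral) auto
  moreover have "infsetsum g UNIV = infsum g UNIV"
    using int by (intro infsetsum_infsum) (simp add: abs_summable_on_def)
  moreover have "infsum g A = infsum g UNIV"
    using out by (intro infsum_cong_neutral) (auto simp: g_def)
  ultimately have "infsum g A = enn2real (\<integral>\<^sup>+ x. ennreal (g x) \<partial>count_space UNIV)" by simp
  then show ?thesis unfolding eq by (simp add: g_def[abs_def])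
qed

lemma finH:
  assumes e: "0 < \<epsilon>" "\<epsilon> < 1"
  shows "(\<integral>\<^sup>+ x. ennreal (hbar \<epsilon> Q x) \<partial>map_pmf fst Q)
     \<le> (\<integral>\<^sup>+ z. ennreal (FF Q (fst z) (snd z)) \<partial>Q) / ennreal \<epsilon> + 1"
proof -
  have "(\<integral>\<^sup>+ x. ennreal (hbar \<epsilon> Q x) \<partial>map_pmf fst Q)
     \<le> (\<integral>\<^sup>+ x. (\<integral>\<^sup>+ y. ennreal (FF Q x y) \<partial>cnd Q x) / ennreal \<epsilon> + 1 \<partial>map_pmf fst Q)"
  proof (intro nn_integral_mono_AE, unfold AE_measure_pmf_iff, intro ballI)
    fix x assume "x \<in> set_pmf (map_pmf fst Q)"
    then have px: "pmf (map_pmf fst Q) x > 0" by (simp add: pmf_positive)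
    interpret H: hsetup Q x \<epsilon> using px e by unfold_locales auto
    show "ennreal (hbar \<epsilon> Q x) \<le> (\<integral>\<^sup>+ y. ennreal (FF Q x y) \<partial>cnd Q x) / ennreal \<epsilon> + 1"
      by (rule H.hbar_markov)
  qed
  also have "\<dots> = (\<integral>\<^sup>+ x. (\<integral>\<^sup>+ y. ennreal (FF Q x y) \<partial>cnd Q x) \<partial>map_pmf fst Q) / ennreal \<epsilon> + 1"
    by (simp add: nn_integral_add nn_integral_divide measure_pmf.emeasure_space_1)
  also have "\<dots> = (\<integral>\<^sup>+ z. ennreal (FF Q (fst z) (snd z)) \<partial>Q) / ennreal \<epsilon> + 1"
    by (simp only: tower)
  finally show ?thesis .
qed

lemma fin_div: "(X::ennreal) \<noteq> \<infinity> \<Longrightarrow> \<epsilon> > 0 \<Longrightarrow> X / ennreal \<epsilon> + 1 \<noteq> top"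
  by (simp add: ennreal_divide_eq_top_iff)

lemma Wtot:
  "(\<integral>\<^sup>+ x. indicator B x * (\<integral>\<^sup>+ y. ennreal (pmf (map_pmf snd R) y / pmf (map_pmf snd R1) y / ln 2) \<partial>cnd R1 x) \<partial>map_pmf fst R1)
    \<le> ennreal (1 / ln 2)"
proof -
  have "(\<integral>\<^sup>+ x. indicator B x * (\<integral>\<^sup>+ y. ennreal (pmf (map_pmf snd R) y / pmf (map_pmf snd R1) y / ln 2) \<partial>cnd R1 x) \<partial>map_pmf fst R1)
     \<le> (\<integral>\<^sup>+ x. (\<integral>\<^sup>+ y. ennreal (pmf (map_pmf snd R) y / pmf (map_pmf snd R1) y / ln 2) \<partial>cnd R1 x) \<partial>map_pmf fst R1)"
    by (intro nn_integral_mono) (auto simp: indicator_def)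
  also have "\<dots> = (\<integral>\<^sup>+ z. ennreal (pmf (map_pmf snd R) (snd z) / pmf (map_pmf snd R1) (snd z) / ln 2) \<partial>R1)"
    by (rule tower)
  also have "\<dots> = (\<integral>\<^sup>+ y. ennreal (pmf (map_pmf snd R) y / pmf (map_pmf snd R1) y / ln 2) \<partial>map_pmf snd R1)"
    by simp
  also have "\<dots> = (\<integral>\<^sup>+ y. ennreal (pmf (map_pmf snd R1) y) * ennreal (pmf (map_pmf snd R) y / pmf (map_pmf snd R1) y / ln 2) \<partial>count_space UNIV)"
    by (rule nn_integral_measure_pmf)
  also have "\<dots> \<le> (\<integral>\<^sup>+ y. ennreal (1 / ln 2) * ennreal (pmf (map_pmf snd R) y) \<partial>count_space UNIV)"
  proof (intro nn_integral_mono)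
    fix y
    show "ennreal (pmf (map_pmf snd R1) y) * ennreal (pmf (map_pmf snd R) y / pmf (map_pmf snd R1) y / ln 2)
        \<le> ennreal (1 / ln 2) * ennreal (pmf (map_pmf snd R) y)"
    proof (cases "pmf (map_pmf snd R1) y = 0")
      case False
      then have "pmf (map_pmf snd R1) y * (pmf (map_pmf snd R) y / pmf (map_pmf snd R1) y / ln 2)
           = 1 / ln 2 * pmf (map_pmf snd R) y" by simp
      then show ?thesis by (simp add: ennreal_mult[symmetric])
    qed simp
  qed
  also have "\<dots> = ennreal (1 / ln 2)"
    by (simp add: nn_integral_cmult nn_integral_pmf)
  finally show ?thesis .
qed


definition Dfun :: "('a \<times> 'b) pmf \<Rightarrow> ('a \<times> 'b) pmf \<Rightarrow> ('a \<times> 'b) pmf \<Rightarrow> real \<Rightarrow> real \<Rightarrow> real \<Rightarrow> 'a \<Rightarrow> real" where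
  "Dfun R1 R2 R a1 a2 t x = a1 * measure (cnd R1 x) {y. pmf (map_pmf snd R) y > t * pmf (map_pmf snd R1) y}
      + a2 * measure (cnd R2 x) {y. pmf (map_pmf snd R) y > t * pmf (map_pmf snd R2) y}"

lemma Gint:
  assumes t: "t > 0"
  shows "(\<integral>\<^sup>+ x. ennreal (measure (cnd R1 x) {y. pmf (map_pmf snd R) y > t * pmf (map_pmf snd R1) y}) \<partial>map_pmf fst R1)
     \<le> ennreal (1 / t)"
proof -
  let ?G = "{y. pmf (map_pmf snd R) y > t * pmf (map_pmf snd R1) y}"
  have "(\<integral>\<^sup>+ x. ennreal (measure (cnd R1 x) ?G) \<partial>map_pmf fst R1)
      = (\<integral>\<^sup>+ x. (\<integral>\<^sup>+ y. indicator ?G y \<partial>cnd R1 x) \<partial>map_pmf fst R1)"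
    by (intro nn_integral_cong) (simp add: measure_pmf.emeasure_eq_measure)
  also have "\<dots> = (\<integral>\<^sup>+ z. indicator ?G (snd z) \<partial>R1)"
    by (rule tower)
  also have "\<dots> = (\<integral>\<^sup>+ y. indicator ?G y \<partial>map_pmf snd R1)"
    by simp
  also have "\<dots> = ennreal (measure (map_pmf snd R1) ?G)"
    by (simp only: nn_integral_indicator sets_measure_pmf UNIV_I measure_pmf.emeasure_eq_measure)
  also have "\<dots> \<le> ennreal (1 / t)"
    using pmf_ratio[OF t, of "map_pmf snd R1" "map_pmf snd R"] by (intro ennreal_leI) simp
  finally show ?thesis .
qed

locale mixsetup =
  fixes R1 R2 R :: "('a \<times> 'b) pmf" and \<alpha>1 \<alpha>2 :: real
  assumes marg: "map_pmf fst R1 = map_pmf fst R2"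
    and a1: "\<alpha>1 > 0" and a2: "\<alpha>2 > 0" and a12: "\<alpha>1 + \<alpha>2 = 1"
    and mix: "\<And>z. pmf R z = \<alpha>1 * pmf R1 z + \<alpha>2 * pmf R2 z"
begin

lemma symm: "mixsetup R2 R1 R \<alpha>2 \<alpha>1"
  using marg a1 a2 a12 mix by unfold_locales (auto simp: add.commute)

lemma margR: "map_pmf fst R = map_pmf fst R1"
  by (rule pmf_eqI) (simp add: mix_map[of R \<alpha>1 R1 \<alpha>2 R2, OF mix] a1 a2 less_imp_le marg flip: distrib_right a12)

lemma sndR: "pmf (map_pmf snd R) y = \<alpha>1 * pmf (map_pmf snd R1) y + \<alpha>2 * pmf (map_pmf snd R2) y"
  using mix_map[of R \<alpha>1 R1 \<alpha>2 R2, OF mix] a1 a2 by simp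

lemma cndR: assumes "pmf (map_pmf fst R1) x > 0"
  shows "pmf (cnd R x) y = \<alpha>1 * pmf (cnd R1 x) y + \<alpha>2 * pmf (cnd R2 x) y"
  using assms by (simp add: pmf_cnd margR mix flip: marg add_divide_distrib)

lemma tailR: assumes "pmf (map_pmf fst R1) x > 0"
  shows "measure (cnd R x) A = \<alpha>1 * measure (cnd R1 x) A + \<alpha>2 * measure (cnd R2 x) A"
  using a1 a2 by (intro mix_measure cndR assms) auto

lemma dirA1:
  assumes px: "pmf (map_pmf fst R1) x > 0" and t: "t \<ge> 1"
    and e: "0 < \<epsilon>" "\<epsilon> < 1" and e': "0 < \<epsilon>'" "\<epsilon>' < 1"
    and ee: "\<alpha>1 * (\<epsilon>' - 1 / t) \<ge> \<epsilon>"
  shows "hbar \<epsilon>' R1 x - log 2 t + log 2 \<alpha>1 - 1 \<le> hbar \<epsilon> R x"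
proof -
  have pxR: "pmf (map_pmf fst R) x > 0" using px by (simp add: margR)
  have px2: "pmf (map_pmf fst R2) x > 0" using px by (simp add: marg)
  interpret H1: hsetup R1 x \<epsilon>' using px e' by unfold_locales auto
  interpret H: hsetup R x \<epsilon> using pxR e by unfold_locales auto
  define a where "a = hbar \<epsilon>' R1 x - log 2 t + log 2 \<alpha>1 - 1"
  define b where "b = hbar \<epsilon>' R1 x - 1"
  have tb: "tail R1 x b > \<epsilon>'"
  proof (rule ccontr)
    assume "\<not> tail R1 x b > \<epsilon>'"
    then have "hbar \<epsilon>' R1 x \<le> b" by (intro H1.hbar_le) simp
    then show False by (simp add: b_def)
  qed
  define G where "G = {y. pmf (cnd R2 x) y > t * pmf (cnd R1 x) y}"
  have G: "measure (cnd R1 x) G \<le> 1 / t"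
    unfolding G_def using t by (intro pmf_ratio) simp
  have sub: "{y. FF R1 x y > b} \<inter> set_pmf (cnd R1 x) \<subseteq> {y. FF R x y > a} \<union> G"
  proof
    fix y assume y: "y \<in> {y. FF R1 x y > b} \<inter> set_pmf (cnd R1 x)"
    show "y \<in> {y. FF R x y > a} \<union> G"
    proof (cases "y \<in> G")
      case False
      have r1: "pmf R1 (x,y) > 0" using in_set_cnd[OF px] y by auto
      have "pmf R2 (x,y) \<le> t * pmf R1 (x,y)"
        using False px px2 marg by (auto simp: G_def pmf_cnd divide_le_eq field_simps)
      then have "pmf R (x,y) \<le> (\<alpha>1 + \<alpha>2 * t) * pmf R1 (x,y)"
        using a2 by (simp add: mix distrib_right)
      also have "\<dots> \<le> t * pmf R1 (x,y)"
      proof (rule mult_right_mono)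
        have a2e: "\<alpha>2 = 1 - \<alpha>1" using a12 by simp
        have "\<alpha>1 * (t - 1) \<ge> 0" using a1 t by simp
        then show "\<alpha>1 + \<alpha>2 * t \<le> t" unfolding a2e by (simp add: algebra_simps)
      qed (use r1 in simp)
      finally have rle: "pmf R (x,y) \<le> t * pmf R1 (x,y)" .
      have rpos: "pmf R (x,y) > 0" using r1 a1 a2 by (simp add: mix add_pos_nonneg)
      have q1: "pmf (map_pmf snd R1) y > 0" using pmf_le_snd[of R1 x y] r1 by linarith
      have qge: "pmf (map_pmf snd R) y \<ge> \<alpha>1 * pmf (map_pmf snd R1) y"
        using a2 by (simp add: sndR)
      have "FF R x y = log 2 (pmf (map_pmf snd R) y) - log 2 (pmf R (x,y))"
        using rpos by (rule FF_eq)
      also have "\<dots> \<ge> log 2 (\<alpha>1 * pmf (map_pmf snd R1) y) - log 2 (t * pmf R1 (x,y))"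
        using qge rle rpos q1 a1 by (intro diff_mono) (auto intro!: log_mono)
      finally have "FF R x y \<ge> log 2 \<alpha>1 + log 2 (pmf (map_pmf snd R1) y) - log 2 t - log 2 (pmf R1 (x,y))"
        using a1 q1 t r1 by (simp add: log_mult)
      moreover have "FF R1 x y = log 2 (pmf (map_pmf snd R1) y) - log 2 (pmf R1 (x,y))"
        using r1 by (rule FF_eq)
      ultimately have "FF R x y \<ge> FF R1 x y + log 2 \<alpha>1 - log 2 t" by simp
      with y show ?thesis by (auto simp: a_def b_def)
    qed simp
  qed
  have "tail R1 x b = measure (cnd R1 x) ({y. FF R1 x y > b} \<inter> set_pmf (cnd R1 x))"
    unfolding tail_def by (rule measure_Int_set_pmf[symmetric])
  also have "\<dots> \<le> measure (cnd R1 x) ({y. FF R x y > a} \<union> G)"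
    by (rule measure_pmf.finite_measure_mono[OF sub]) simp
  also have "\<dots> \<le> measure (cnd R1 x) {y. FF R x y > a} + measure (cnd R1 x) G"
    by (rule measure_subadditive) auto
  finally have "tail R1 x b \<le> measure (cnd R1 x) {y. FF R x y > a} + 1 / t" using G by simp
  then have "\<alpha>1 * (\<epsilon>' - 1/t) < \<alpha>1 * measure (cnd R1 x) {y. FF R x y > a}"
    using tb a1 by (intro mult_strict_left_mono) auto
  also have "\<dots> \<le> tail R x a"
    unfolding tail_def tailR[OF px] using a2 by simp
  finally have "tail R x a > \<epsilon>" using ee by simp
  then have "a \<le> hbar \<epsilon> R x" by (rule H.hbar_ge)
  then show ?thesis by (simp add: a_def)
qed

lemma compB1:
  assumes px: "pmf (map_pmf fst R1) x > 0" and t: "t > 0"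
  shows "measure (cnd R1 x) {y. FF R x y > b + log 2 t - log 2 \<alpha>1}
     \<le> tail R1 x b + measure (cnd R1 x) {y. pmf (map_pmf snd R) y > t * pmf (map_pmf snd R1) y}"
proof -
  define G where "G = {y. pmf (map_pmf snd R) y > t * pmf (map_pmf snd R1) y}"
  have sub: "{y. FF R x y > b + log 2 t - log 2 \<alpha>1} \<inter> set_pmf (cnd R1 x) \<subseteq> {y. FF R1 x y > b} \<union> G"
  proof
    fix y assume y: "y \<in> {y. FF R x y > b + log 2 t - log 2 \<alpha>1} \<inter> set_pmf (cnd R1 x)"
    show "y \<in> {y. FF R1 x y > b} \<union> G"
    proof (cases "y \<in> G")
      case False
      have r1: "pmf R1 (x,y) > 0" using in_set_cnd[OF px] y by auto
      have qle: "pmf (map_pmf snd R) y \<le> t * pmf (map_pmf snd R1) y" using False by (simp add: G_def)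
      have rge: "pmf R (x,y) \<ge> \<alpha>1 * pmf R1 (x,y)" using a2 by (simp add: mix)
      have rpos: "pmf R (x,y) > 0" using r1 a1 a2 by (simp add: mix add_pos_nonneg)
      have q1: "pmf (map_pmf snd R1) y > 0" using pmf_le_snd[of R1 x y] r1 by linarith
      have q: "pmf (map_pmf snd R) y > 0" using pmf_le_snd[of R x y] rpos by linarith
      have "FF R x y = log 2 (pmf (map_pmf snd R) y) - log 2 (pmf R (x,y))"
        using rpos by (rule FF_eq)
      also have "\<dots> \<le> log 2 (t * pmf (map_pmf snd R1) y) - log 2 (\<alpha>1 * pmf R1 (x,y))"
        using qle rge rpos q a1 r1 by (intro diff_mono) (auto intro!: log_mono)
      finally have "FF R x y \<le> log 2 t + log 2 (pmf (map_pmf snd R1) y) - log 2 \<alpha>1 - log 2 (pmf R1 (x,y))"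
        using a1 q1 t r1 by (simp add: log_mult)
      moreover have "FF R1 x y = log 2 (pmf (map_pmf snd R1) y) - log 2 (pmf R1 (x,y))"
        using r1 by (rule FF_eq)
      ultimately have "FF R x y \<le> FF R1 x y + log 2 t - log 2 \<alpha>1" by simp
      with y show ?thesis by auto
    qed simp
  qed
  have "measure (cnd R1 x) {y. FF R x y > b + log 2 t - log 2 \<alpha>1}
      = measure (cnd R1 x) ({y. FF R x y > b + log 2 t - log 2 \<alpha>1} \<inter> set_pmf (cnd R1 x))"
    by (rule measure_Int_set_pmf[symmetric])
  also have "\<dots> \<le> measure (cnd R1 x) ({y. FF R1 x y > b} \<union> G)"
    by (rule measure_pmf.finite_measure_mono[OF sub]) simp
  also have "\<dots> \<le> measure (cnd R1 x) {y. FF R1 x y > b} + measure (cnd R1 x) G"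
    by (rule measure_subadditive) auto
  finally show ?thesis by (simp add: tail_def G_def)
qed

lemma dirB:
  assumes px: "pmf (map_pmf fst R1) x > 0" and t: "t \<ge> 1"
    and e: "0 < \<epsilon>" "\<epsilon> < 1"
    and D: "\<alpha>1 * measure (cnd R1 x) {y. pmf (map_pmf snd R) y > t * pmf (map_pmf snd R1) y}
          + \<alpha>2 * measure (cnd R2 x) {y. pmf (map_pmf snd R) y > t * pmf (map_pmf snd R2) y} \<le> \<epsilon> / 2"
  shows "hbar \<epsilon> R x \<le> max (hbar (\<epsilon>/2) R1 x) (hbar (\<epsilon>/2) R2 x) + log 2 t - log 2 (min \<alpha>1 \<alpha>2) + 1"
proof -
  interpret S: mixsetup R2 R1 R \<alpha>2 \<alpha>1 by (rule symm)
  have pxR: "pmf (map_pmf fst R) x > 0" using px by (simp add: margR)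
  have px2: "pmf (map_pmf fst R2) x > 0" using px by (simp add: marg)
  interpret H1: hsetup R1 x "\<epsilon>/2" using px e by unfold_locales auto
  interpret H2: hsetup R2 x "\<epsilon>/2" using px2 e by unfold_locales auto
  interpret H: hsetup R x \<epsilon> using pxR e by unfold_locales auto
  define m where "m = max (hbar (\<epsilon>/2) R1 x) (hbar (\<epsilon>/2) R2 x)"
  define a where "a = m + log 2 t - log 2 (min \<alpha>1 \<alpha>2) + 1"
  have lm1: "log 2 (min \<alpha>1 \<alpha>2) \<le> log 2 \<alpha>1" using a1 a2 by (auto intro!: log_mono simp: min_def)
  have lm2: "log 2 (min \<alpha>1 \<alpha>2) \<le> log 2 \<alpha>2" using a1 a2 by (auto intro!: log_mono simp: min_def)
  have tl1: "tail R1 x (a - log 2 t + log 2 \<alpha>1) \<le> \<epsilon>/2"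
    by (rule H1.tail_gt) (use lm1 in \<open>simp add: a_def m_def\<close>)
  have tl2: "tail R2 x (a - log 2 t + log 2 \<alpha>2) \<le> \<epsilon>/2"
    by (rule H2.tail_gt) (use lm2 in \<open>simp add: a_def m_def\<close>)
  have m1: "measure (cnd R1 x) {y. FF R x y > a} \<le> \<epsilon>/2 + measure (cnd R1 x) {y. pmf (map_pmf snd R) y > t * pmf (map_pmf snd R1) y}"
    using compB1[OF px, of t "a - log 2 t + log 2 \<alpha>1"] tl1 t by simp
  have m2: "measure (cnd R2 x) {y. FF R x y > a} \<le> \<epsilon>/2 + measure (cnd R2 x) {y. pmf (map_pmf snd R) y > t * pmf (map_pmf snd R2) y}"
    using S.compB1[OF px2, of t "a - log 2 t + log 2 \<alpha>2"] tl2 t by simp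
  have "tail R x a = \<alpha>1 * measure (cnd R1 x) {y. FF R x y > a} + \<alpha>2 * measure (cnd R2 x) {y. FF R x y > a}"
    unfolding tail_def by (rule tailR[OF px])
  also have "\<dots> \<le> \<alpha>1 * (\<epsilon>/2 + measure (cnd R1 x) {y. pmf (map_pmf snd R) y > t * pmf (map_pmf snd R1) y})
       + \<alpha>2 * (\<epsilon>/2 + measure (cnd R2 x) {y. pmf (map_pmf snd R) y > t * pmf (map_pmf snd R2) y})"
    using m1 m2 a1 a2 by (intro add_mono mult_left_mono) auto
  also have "\<dots> = (\<alpha>1 + \<alpha>2) * (\<epsilon>/2) + (\<alpha>1 * measure (cnd R1 x) {y. pmf (map_pmf snd R) y > t * pmf (map_pmf snd R1) y}
          + \<alpha>2 * measure (cnd R2 x) {y. pmf (map_pmf snd R) y > t * pmf (map_pmf snd R2) y})"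
    by (simp add: algebra_simps)
  also have "\<dots> \<le> \<epsilon>" using D a12 by simp
  finally have "hbar \<epsilon> R x \<le> a" by (rule H.hbar_le)
  then show ?thesis by (simp add: a_def m_def)
qed

lemma compE1:
  assumes px: "pmf (map_pmf fst R1) x > 0"
  shows "(\<integral>\<^sup>+ y. ennreal (FF R x y) \<partial>cnd R1 x)
     \<le> (\<integral>\<^sup>+ y. ennreal (FF R1 x y) \<partial>cnd R1 x) + ennreal (- log 2 \<alpha>1)
        + (\<integral>\<^sup>+ y. ennreal (pmf (map_pmf snd R) y / pmf (map_pmf snd R1) y / ln 2) \<partial>cnd R1 x)"
proof -
  have la: "- log 2 \<alpha>1 \<ge> 0" using a1 a2 a12 by simp
  have "(\<integral>\<^sup>+ y. ennreal (FF R x y) \<partial>cnd R1 x)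
     \<le> (\<integral>\<^sup>+ y. ennreal (FF R1 x y) + ennreal (- log 2 \<alpha>1)
        + ennreal (pmf (map_pmf snd R) y / pmf (map_pmf snd R1) y / ln 2) \<partial>cnd R1 x)"
  proof (intro nn_integral_mono_AE, unfold AE_measure_pmf_iff, intro ballI)
    fix y assume y: "y \<in> set_pmf (cnd R1 x)"
    have r1: "pmf R1 (x,y) > 0" using in_set_cnd[OF px] y by auto
    have rge: "pmf R (x,y) \<ge> \<alpha>1 * pmf R1 (x,y)" using a2 by (simp add: mix)
    have rpos: "pmf R (x,y) > 0" using r1 a1 a2 by (simp add: mix add_pos_nonneg)
    have q1: "pmf (map_pmf snd R1) y > 0" using pmf_le_snd[of R1 x y] r1 by linarith
    have q: "pmf (map_pmf snd R) y > 0" using pmf_le_snd[of R x y] rpos by linarith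
    have "FF R x y = log 2 (pmf (map_pmf snd R) y) - log 2 (pmf R (x,y))"
      using rpos by (rule FF_eq)
    also have "\<dots> \<le> log 2 (pmf (map_pmf snd R) y) - log 2 (\<alpha>1 * pmf R1 (x,y))"
      using rge rpos a1 r1 by (intro diff_mono) (auto intro!: log_mono)
    also have "\<dots> = (log 2 (pmf (map_pmf snd R1) y) - log 2 (pmf R1 (x,y))) - log 2 \<alpha>1
        + log 2 (pmf (map_pmf snd R) y / pmf (map_pmf snd R1) y)"
      using a1 q1 q r1 by (simp add: log_mult log_divide)
    also have "\<dots> = FF R1 x y - log 2 \<alpha>1 + log 2 (pmf (map_pmf snd R) y / pmf (map_pmf snd R1) y)"
      using r1 by (simp add: FF_eq)
    also have "\<dots> \<le> FF R1 x y - log 2 \<alpha>1 + pmf (map_pmf snd R) y / pmf (map_pmf snd R1) y / ln 2"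
      using q q1 by (intro add_left_mono log2_le) simp
    finally have le: "FF R x y \<le> FF R1 x y + (- log 2 \<alpha>1) + pmf (map_pmf snd R) y / pmf (map_pmf snd R1) y / ln 2"
      by simp
    have "ennreal (FF R x y) \<le> ennreal (FF R1 x y + (- log 2 \<alpha>1) + pmf (map_pmf snd R) y / pmf (map_pmf snd R1) y / ln 2)"
      using le by (rule ennreal_leI)
    also have "\<dots> = ennreal (FF R1 x y) + ennreal (- log 2 \<alpha>1) + ennreal (pmf (map_pmf snd R) y / pmf (map_pmf snd R1) y / ln 2)"
    proof -
      have w: "pmf (map_pmf snd R) y / pmf (map_pmf snd R1) y / ln 2 \<ge> 0" using q q1 by simp
      show ?thesis
        using ennreal_plus[OF add_nonneg_nonneg[OF FF_nonneg[OF r1] la] w]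
              ennreal_plus[OF FF_nonneg[OF r1] la] by simp
    qed
    finally show "ennreal (FF R x y) \<le> ennreal (FF R1 x y) + ennreal (- log 2 \<alpha>1) + ennreal (pmf (map_pmf snd R) y / pmf (map_pmf snd R1) y / ln 2)" .
  qed
  also have "\<dots> = (\<integral>\<^sup>+ y. ennreal (FF R1 x y) \<partial>cnd R1 x) + ennreal (- log 2 \<alpha>1)
        + (\<integral>\<^sup>+ y. ennreal (pmf (map_pmf snd R) y / pmf (map_pmf snd R1) y / ln 2) \<partial>cnd R1 x)"
    by (simp add: nn_integral_add measure_pmf.emeasure_space_1)
  finally show ?thesis .
qed

lemma compLoc1:
  "(\<integral>\<^sup>+ x. indicator B x * (\<integral>\<^sup>+ y. ennreal (FF R x y) \<partial>cnd R1 x) \<partial>map_pmf fst R1)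
   \<le> (\<integral>\<^sup>+ z. indicator B (fst z) * ennreal (FF R1 (fst z) (snd z)) \<partial>R1)
      + ennreal (- log 2 \<alpha>1) * emeasure (map_pmf fst R1) B + ennreal (1 / ln 2)"
proof -
  let ?W = "\<lambda>x. (\<integral>\<^sup>+ y. ennreal (pmf (map_pmf snd R) y / pmf (map_pmf snd R1) y / ln 2) \<partial>cnd R1 x)"
  let ?E = "\<lambda>x. (\<integral>\<^sup>+ y. ennreal (FF R1 x y) \<partial>cnd R1 x)"
  have "(\<integral>\<^sup>+ x. indicator B x * (\<integral>\<^sup>+ y. ennreal (FF R x y) \<partial>cnd R1 x) \<partial>map_pmf fst R1)
     \<le> (\<integral>\<^sup>+ x. indicator B x * ?E x + ennreal (- log 2 \<alpha>1) * indicator B x + indicator B x * ?W x \<partial>map_pmf fst R1)"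
  proof (intro nn_integral_mono_AE, unfold AE_measure_pmf_iff, intro ballI)
    fix x assume "x \<in> set_pmf (map_pmf fst R1)"
    then have px: "pmf (map_pmf fst R1) x > 0" by (simp add: pmf_positive)
    have "indicator B x * (\<integral>\<^sup>+ y. ennreal (FF R x y) \<partial>cnd R1 x)
       \<le> indicator B x * (?E x + ennreal (- log 2 \<alpha>1) + ?W x)"
      by (intro mult_left_mono compE1[OF px]) simp
    also have "\<dots> = indicator B x * ?E x + ennreal (- log 2 \<alpha>1) * indicator B x + indicator B x * ?W x"
      by (simp add: distrib_left mult.commute)
    finally show "indicator B x * (\<integral>\<^sup>+ y. ennreal (FF R x y) \<partial>cnd R1 x)
       \<le> indicator B x * ?E x + ennreal (- log 2 \<alpha>1) * indicator B x + indicator B x * ?W x" .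
  qed
  also have "\<dots> = (\<integral>\<^sup>+ x. indicator B x * ?E x \<partial>map_pmf fst R1) + ennreal (- log 2 \<alpha>1) * emeasure (map_pmf fst R1) B
       + (\<integral>\<^sup>+ x. indicator B x * ?W x \<partial>map_pmf fst R1)"
    by (simp add: nn_integral_add nn_integral_cmult nn_integral_cmult_indicator del: nn_integral_map_pmf)
  also have "(\<integral>\<^sup>+ x. indicator B x * ?E x \<partial>map_pmf fst R1)
      = (\<integral>\<^sup>+ x. (\<integral>\<^sup>+ y. indicator B x * ennreal (FF R1 x y) \<partial>cnd R1 x) \<partial>map_pmf fst R1)"
    by (intro nn_integral_cong) (simp add: nn_integral_cmult)
  also have "\<dots> = (\<integral>\<^sup>+ z. indicator B (fst z) * ennreal (FF R1 (fst z) (snd z)) \<partial>R1)"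
    by (rule tower)
  finally show ?thesis using Wtot[of R1 B R] by (meson add_left_mono order_trans)
qed

lemma locE:
  "(\<integral>\<^sup>+ x. indicator B x * (\<integral>\<^sup>+ y. ennreal (FF R x y) \<partial>cnd R x) \<partial>map_pmf fst R1)
   \<le> ennreal \<alpha>1 * ((\<integral>\<^sup>+ z. indicator B (fst z) * ennreal (FF R1 (fst z) (snd z)) \<partial>R1)
      + ennreal (- log 2 \<alpha>1) * emeasure (map_pmf fst R1) B + ennreal (1 / ln 2))
   + ennreal \<alpha>2 * ((\<integral>\<^sup>+ z. indicator B (fst z) * ennreal (FF R2 (fst z) (snd z)) \<partial>R2)
      + ennreal (- log 2 \<alpha>2) * emeasure (map_pmf fst R1) B + ennreal (1 / ln 2))"
proof -
  interpret S: mixsetup R2 R1 R \<alpha>2 \<alpha>1 by (rule symm)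
  have "(\<integral>\<^sup>+ x. indicator B x * (\<integral>\<^sup>+ y. ennreal (FF R x y) \<partial>cnd R x) \<partial>map_pmf fst R1)
      = (\<integral>\<^sup>+ x. ennreal \<alpha>1 * (indicator B x * (\<integral>\<^sup>+ y. ennreal (FF R x y) \<partial>cnd R1 x))
          + ennreal \<alpha>2 * (indicator B x * (\<integral>\<^sup>+ y. ennreal (FF R x y) \<partial>cnd R2 x)) \<partial>map_pmf fst R1)"
  proof (intro nn_integral_cong_AE, unfold AE_measure_pmf_iff, intro ballI)
    fix x assume "x \<in> set_pmf (map_pmf fst R1)"
    then have px: "pmf (map_pmf fst R1) x > 0" by (simp add: pmf_positive)
    have "(\<integral>\<^sup>+ y. ennreal (FF R x y) \<partial>cnd R x) = ennreal \<alpha>1 * (\<integral>\<^sup>+ y. ennreal (FF R x y) \<partial>cnd R1 x)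
       + ennreal \<alpha>2 * (\<integral>\<^sup>+ y. ennreal (FF R x y) \<partial>cnd R2 x)"
      using a1 a2 by (intro mix_nn_integral cndR[OF px]) auto
    then show "indicator B x * (\<integral>\<^sup>+ y. ennreal (FF R x y) \<partial>cnd R x)
      = ennreal \<alpha>1 * (indicator B x * (\<integral>\<^sup>+ y. ennreal (FF R x y) \<partial>cnd R1 x))
          + ennreal \<alpha>2 * (indicator B x * (\<integral>\<^sup>+ y. ennreal (FF R x y) \<partial>cnd R2 x))"
      by (simp add: distrib_left mult.left_commute)
  qed
  also have "\<dots> = ennreal \<alpha>1 * (\<integral>\<^sup>+ x. indicator B x * (\<integral>\<^sup>+ y. ennreal (FF R x y) \<partial>cnd R1 x) \<partial>map_pmf fst R1)
     + ennreal \<alpha>2 * (\<integral>\<^sup>+ x. indicator B x * (\<integral>\<^sup>+ y. ennreal (FF R x y) \<partial>cnd R2 x) \<partial>map_pmf fst R2)"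
    by (simp add: nn_integral_add nn_integral_cmult marg del: nn_integral_map_pmf)
  also have "\<dots> \<le> ennreal \<alpha>1 * ((\<integral>\<^sup>+ z. indicator B (fst z) * ennreal (FF R1 (fst z) (snd z)) \<partial>R1)
      + ennreal (- log 2 \<alpha>1) * emeasure (map_pmf fst R1) B + ennreal (1 / ln 2))
   + ennreal \<alpha>2 * ((\<integral>\<^sup>+ z. indicator B (fst z) * ennreal (FF R2 (fst z) (snd z)) \<partial>R2)
      + ennreal (- log 2 \<alpha>2) * emeasure (map_pmf fst R2) B + ennreal (1 / ln 2))"
    by (intro add_mono mult_left_mono compLoc1 S.compLoc1) auto
  finally show ?thesis by (simp add: marg)
qed

lemma Dint:
  assumes t: "t > 0"
  shows "(\<integral>\<^sup>+ x. ennreal (Dfun R1 R2 R \<alpha>1 \<alpha>2 t x) \<partial>map_pmf fst R1) \<le> ennreal (1 / t)"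
proof -
  have "(\<integral>\<^sup>+ x. ennreal (Dfun R1 R2 R \<alpha>1 \<alpha>2 t x) \<partial>map_pmf fst R1)
    = ennreal \<alpha>1 * (\<integral>\<^sup>+ x. ennreal (measure (cnd R1 x) {y. pmf (map_pmf snd R) y > t * pmf (map_pmf snd R1) y}) \<partial>map_pmf fst R1)
    + ennreal \<alpha>2 * (\<integral>\<^sup>+ x. ennreal (measure (cnd R2 x) {y. pmf (map_pmf snd R) y > t * pmf (map_pmf snd R2) y}) \<partial>map_pmf fst R2)"
    unfolding Dfun_def using a1 a2
    by (simp add: nn_integral_add nn_integral_cmult ennreal_plus ennreal_mult marg del: nn_integral_map_pmf)
  also have "\<dots> \<le> ennreal \<alpha>1 * ennreal (1/t) + ennreal \<alpha>2 * ennreal (1/t)"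
    by (intro add_mono mult_left_mono Gint t) auto
  also have "\<dots> = ennreal (1/t)"
  proof -
    have "ennreal \<alpha>1 * ennreal (1/t) + ennreal \<alpha>2 * ennreal (1/t) = (ennreal \<alpha>1 + ennreal \<alpha>2) * ennreal (1/t)"
      by (simp add: distrib_right)
    also have "ennreal \<alpha>1 + ennreal \<alpha>2 = 1" using a1 a2 a12 by (simp add: ennreal_plus[symmetric] del: ennreal_plus)
    finally show ?thesis by simp
  qed
  finally show ?thesis .
qed

lemma pB:
  assumes t: "t > 0" and e: "\<epsilon> > 0"
  shows "measure (map_pmf fst R1) {x. Dfun R1 R2 R \<alpha>1 \<alpha>2 t x > \<epsilon>/2} \<le> 2 / (\<epsilon> * t)"
proof -
  have fin: "(\<integral>\<^sup>+ x. ennreal (Dfun R1 R2 R \<alpha>1 \<alpha>2 t x) \<partial>map_pmf fst R1) \<noteq> \<infinity>"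
  proof -
    have "(\<integral>\<^sup>+ x. ennreal (Dfun R1 R2 R \<alpha>1 \<alpha>2 t x) \<partial>map_pmf fst R1) < \<infinity>"
      by (rule le_less_trans[OF Dint[OF t]]) simp
    then show ?thesis by simp
  qed
  have "(\<epsilon>/2) * measure (map_pmf fst R1) {x. \<epsilon>/2 \<le> Dfun R1 R2 R \<alpha>1 \<alpha>2 t x}
      \<le> enn2real (\<integral>\<^sup>+ x. ennreal (Dfun R1 R2 R \<alpha>1 \<alpha>2 t x) \<partial>map_pmf fst R1)"
    using e by (intro markov_pmf fin) simp
  also have "\<dots> \<le> 1 / t"
  proof -
    have "enn2real (\<integral>\<^sup>+ x. ennreal (Dfun R1 R2 R \<alpha>1 \<alpha>2 t x) \<partial>map_pmf fst R1) \<le> enn2real (ennreal (1/t))"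
      by (rule enn2real_mono[OF Dint[OF t]]) simp
    then show ?thesis using t by simp
  qed
  finally have a: "(\<epsilon>/2) * measure (map_pmf fst R1) {x. \<epsilon>/2 \<le> Dfun R1 R2 R \<alpha>1 \<alpha>2 t x} \<le> 1 / t" .
  have b: "measure (map_pmf fst R1) {x. Dfun R1 R2 R \<alpha>1 \<alpha>2 t x > \<epsilon>/2}
     \<le> measure (map_pmf fst R1) {x. \<epsilon>/2 \<le> Dfun R1 R2 R \<alpha>1 \<alpha>2 t x}"
    by (intro measure_pmf.finite_measure_mono) auto
  have "(\<epsilon>/2) * measure (map_pmf fst R1) {x. Dfun R1 R2 R \<alpha>1 \<alpha>2 t x > \<epsilon>/2} \<le> 1 / t"
  proof -
    have "(\<epsilon>/2) * measure (map_pmf fst R1) {x. Dfun R1 R2 R \<alpha>1 \<alpha>2 t x > \<epsilon>/2}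
       \<le> (\<epsilon>/2) * measure (map_pmf fst R1) {x. \<epsilon>/2 \<le> Dfun R1 R2 R \<alpha>1 \<alpha>2 t x}"
      using b e by (intro mult_left_mono) auto
    then show ?thesis using a by linarith
  qed
  then show ?thesis using e t by (simp add: field_simps)
qed

end

locale nsetup = mixsetup +
  fixes A :: "'a set" and N u \<eta> :: real
  assumes inA: "\<And>x. x \<in> A \<Longrightarrow> pmf (map_pmf fst R1) x > 0"
    and outA: "\<And>x. x \<notin> A \<Longrightarrow> pmf (map_pmf fst R1) x = 0"
    and Nu: "N \<ge> 0" "u \<ge> 0" "\<eta> \<ge> 0"
    and UI1: "\<And>B. (\<integral>\<^sup>+ z. indicator B (fst z) * ennreal (FF R1 (fst z) (snd z)) \<partial>R1)
                 \<le> ennreal (N * (u * measure (map_pmf fst R1) B + \<eta>))"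
    and UI2: "\<And>B. (\<integral>\<^sup>+ z. indicator B (fst z) * ennreal (FF R2 (fst z) (snd z)) \<partial>R2)
                 \<le> ennreal (N * (u * measure (map_pmf fst R1) B + \<eta>))"
begin

lemma T1fin: "(\<integral>\<^sup>+ z. ennreal (FF R1 (fst z) (snd z)) \<partial>R1) \<noteq> \<infinity>"
proof -
  have "(\<integral>\<^sup>+ z. ennreal (FF R1 (fst z) (snd z)) \<partial>R1) < \<infinity>"
    using le_less_trans[OF UI1[of UNIV]] by simp
  then show ?thesis by simp
qed

lemma T2fin: "(\<integral>\<^sup>+ z. ennreal (FF R2 (fst z) (snd z)) \<partial>R2) \<noteq> \<infinity>"
proof -
  have "(\<integral>\<^sup>+ z. ennreal (FF R2 (fst z) (snd z)) \<partial>R2) < \<infinity>"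
    using le_less_trans[OF UI2[of UNIV]] by simp
  then show ?thesis by simp
qed

lemma TRfin: "(\<integral>\<^sup>+ z. ennreal (FF R (fst z) (snd z)) \<partial>R) \<noteq> \<infinity>"
proof -
  let ?X1 = "(\<integral>\<^sup>+ z. indicator UNIV (fst z) * ennreal (FF R1 (fst z) (snd z)) \<partial>R1)"
  let ?X2 = "(\<integral>\<^sup>+ z. indicator UNIV (fst z) * ennreal (FF R2 (fst z) (snd z)) \<partial>R2)"
  have eq: "(\<integral>\<^sup>+ z. ennreal (FF R (fst z) (snd z)) \<partial>R)
      = (\<integral>\<^sup>+ x. indicator UNIV x * (\<integral>\<^sup>+ y. ennreal (FF R x y) \<partial>cnd R x) \<partial>map_pmf fst R1)"
    using tower[where g="\<lambda>x y. ennreal (FF R x y)" and R=R] by (simp add: margR del: nn_integral_map_pmf)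
  have le: "(\<integral>\<^sup>+ x. indicator UNIV x * (\<integral>\<^sup>+ y. ennreal (FF R x y) \<partial>cnd R x) \<partial>map_pmf fst R1)
     \<le> ennreal \<alpha>1 * (?X1 + ennreal (- log 2 \<alpha>1) * emeasure (map_pmf fst R1) UNIV + ennreal (1 / ln 2))
       + ennreal \<alpha>2 * (?X2 + ennreal (- log 2 \<alpha>2) * emeasure (map_pmf fst R1) UNIV + ennreal (1 / ln 2))"
    by (rule locE)
  have f1: "?X1 < \<infinity>" using T1fin by (simp add: less_top)
  have f2: "?X2 < \<infinity>" using T2fin by (simp add: less_top)
  have "ennreal \<alpha>1 * (?X1 + ennreal (- log 2 \<alpha>1) * emeasure (map_pmf fst R1) UNIV + ennreal (1 / ln 2))
       + ennreal \<alpha>2 * (?X2 + ennreal (- log 2 \<alpha>2) * emeasure (map_pmf fst R1) UNIV + ennreal (1 / ln 2)) < \<infinity>"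
    using f1 f2 by (simp add: ennreal_mult_less_top measure_pmf.emeasure_eq_measure del: indicator_UNIV)
  then show ?thesis using le unfolding eq by (simp add: le_less_trans less_top)
qed

lemma hR_fin: "0 < \<epsilon> \<Longrightarrow> \<epsilon> < 1 \<Longrightarrow> (\<integral>\<^sup>+ x. ennreal (hbar \<epsilon> R x) \<partial>map_pmf fst R1) \<noteq> \<infinity>"
proof -
  assume e: "0 < \<epsilon>" "\<epsilon> < 1"
  have "(\<integral>\<^sup>+ x. ennreal (hbar \<epsilon> R x) \<partial>map_pmf fst R1) \<le> (\<integral>\<^sup>+ z. ennreal (FF R (fst z) (snd z)) \<partial>R) / ennreal \<epsilon> + 1"
    using finH[OF e, of R] unfolding margR .
  then have "(\<integral>\<^sup>+ x. ennreal (hbar \<epsilon> R x) \<partial>map_pmf fst R1) \<noteq> top"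
    by (rule neq_top_trans[OF fin_div[OF TRfin e(1)]])
  then show ?thesis by simp
qed

lemma h1_fin: "0 < \<epsilon> \<Longrightarrow> \<epsilon> < 1 \<Longrightarrow> (\<integral>\<^sup>+ x. ennreal (hbar \<epsilon> R1 x) \<partial>map_pmf fst R1) \<noteq> \<infinity>"
proof -
  assume e: "0 < \<epsilon>" "\<epsilon> < 1"
  have "(\<integral>\<^sup>+ x. ennreal (hbar \<epsilon> R1 x) \<partial>map_pmf fst R1) \<noteq> top"
    by (rule neq_top_trans[OF fin_div[OF T1fin e(1)] finH[OF e]])
  then show ?thesis by simp
qed

lemma h2_fin: "0 < \<epsilon> \<Longrightarrow> \<epsilon> < 1 \<Longrightarrow> (\<integral>\<^sup>+ x. ennreal (hbar \<epsilon> R2 x) \<partial>map_pmf fst R1) \<noteq> \<infinity>"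
proof -
  assume e: "0 < \<epsilon>" "\<epsilon> < 1"
  have "(\<integral>\<^sup>+ x. ennreal (hbar \<epsilon> R2 x) \<partial>map_pmf fst R2) \<noteq> top"
    by (rule neq_top_trans[OF fin_div[OF T2fin e(1)] finH[OF e]])
  then show ?thesis by (simp add: marg del: nn_integral_map_pmf)
qed

lemma hnn:
  assumes "pmf (map_pmf fst R1) x > 0" "0 < \<epsilon>" "\<epsilon> < 1"
  shows "hbar \<epsilon> R x \<ge> 0" "hbar \<epsilon> R1 x \<ge> 0" "hbar \<epsilon> R2 x \<ge> 0"
proof -
  interpret H: hsetup R x \<epsilon> using assms by unfold_locales (auto simp: margR)
  interpret H1: hsetup R1 x \<epsilon> using assms by unfold_locales (auto)
  interpret H2: hsetup R2 x \<epsilon> using assms by unfold_locales (auto simp: marg)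
  show "hbar \<epsilon> R x \<ge> 0" "hbar \<epsilon> R1 x \<ge> 0" "hbar \<epsilon> R2 x \<ge> 0"
    by (rule H.hbar_nonneg H1.hbar_nonneg H2.hbar_nonneg)+
qed

lemma max_fin: assumes e: "0 < \<epsilon>" "\<epsilon> < 1"
  shows "(\<integral>\<^sup>+ x. ennreal (max (hbar \<epsilon> R1 x) (hbar \<epsilon> R2 x)) \<partial>map_pmf fst R1) \<noteq> \<infinity>"
proof -
  have "(\<integral>\<^sup>+ x. ennreal (max (hbar \<epsilon> R1 x) (hbar \<epsilon> R2 x)) \<partial>map_pmf fst R1)
     \<le> (\<integral>\<^sup>+ x. ennreal (hbar \<epsilon> R1 x) + ennreal (hbar \<epsilon> R2 x) \<partial>map_pmf fst R1)"
  proof (intro nn_integral_mono_AE, unfold AE_measure_pmf_iff, intro ballI)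
    fix x assume "x \<in> set_pmf (map_pmf fst R1)"
    then have px: "pmf (map_pmf fst R1) x > 0" by (simp add: pmf_positive)
    have "ennreal (max (hbar \<epsilon> R1 x) (hbar \<epsilon> R2 x)) \<le> ennreal (hbar \<epsilon> R1 x + hbar \<epsilon> R2 x)"
      using hnn[OF px e] by (intro ennreal_leI) simp
    then show "ennreal (max (hbar \<epsilon> R1 x) (hbar \<epsilon> R2 x)) \<le> ennreal (hbar \<epsilon> R1 x) + ennreal (hbar \<epsilon> R2 x)"
      using hnn[OF px e] by (simp add: ennreal_plus)
  qed
  also have "\<dots> = (\<integral>\<^sup>+ x. ennreal (hbar \<epsilon> R1 x) \<partial>map_pmf fst R1) + (\<integral>\<^sup>+ x. ennreal (hbar \<epsilon> R2 x) \<partial>map_pmf fst R1)"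
    by (simp add: nn_integral_add del: nn_integral_map_pmf)
  also have "\<dots> < \<infinity>" using h1_fin[OF e] h2_fin[OF e] by (simp add: less_top)
  finally show ?thesis by simp
qed

lemma SR_eq: assumes e: "0 < \<epsilon>" "\<epsilon> < 1"
  shows "(\<Sum>\<^sub>\<infinity> x\<in>A. pmf (map_pmf fst R) x * hbar \<epsilon> R x) = enn2real (\<integral>\<^sup>+ x. ennreal (hbar \<epsilon> R x) \<partial>map_pmf fst R1)"
  unfolding margR by (rule sumconv) (use hnn[OF _ e] outA hR_fin[OF e] in auto)

lemma SM_eq: assumes e: "0 < \<epsilon>" "\<epsilon> < 1"
  shows "(\<Sum>\<^sub>\<infinity> x\<in>A. pmf (map_pmf fst R) x * max (hbar \<epsilon> R1 x) (hbar \<epsilon> R2 x))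
     = enn2real (\<integral>\<^sup>+ x. ennreal (max (hbar \<epsilon> R1 x) (hbar \<epsilon> R2 x)) \<partial>map_pmf fst R1)"
  unfolding margR by (rule sumconv) (use hnn[OF _ e] outA max_fin[OF e] in \<open>auto simp: le_max_iff_disj\<close>)

lemma levelA:
  assumes t: "t \<ge> 1" and e: "0 < \<epsilon>" "\<epsilon> < 1" and e': "0 < \<epsilon>'" "\<epsilon>' < 1"
    and ee1: "\<alpha>1 * (\<epsilon>' - 1 / t) \<ge> \<epsilon>" and ee2: "\<alpha>2 * (\<epsilon>' - 1 / t) \<ge> \<epsilon>"
  shows "(\<Sum>\<^sub>\<infinity> x\<in>A. pmf (map_pmf fst R) x * max (hbar \<epsilon>' R1 x) (hbar \<epsilon>' R2 x))
     \<le> (\<Sum>\<^sub>\<infinity> x\<in>A. pmf (map_pmf fst R) x * hbar \<epsilon> R x) + (log 2 t - log 2 (min \<alpha>1 \<alpha>2) + 1)"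
proof -
  interpret S: mixsetup R2 R1 R \<alpha>2 \<alpha>1 by (rule symm)
  define c where "c = log 2 t - log 2 (min \<alpha>1 \<alpha>2) + 1"
  have lm1: "log 2 (min \<alpha>1 \<alpha>2) \<le> log 2 \<alpha>1" using a1 a2 by (auto intro!: log_mono simp: min_def)
  have lm2: "log 2 (min \<alpha>1 \<alpha>2) \<le> log 2 \<alpha>2" using a1 a2 by (auto intro!: log_mono simp: min_def)
  have c0: "c \<ge> 0"
  proof -
    have "log 2 (min \<alpha>1 \<alpha>2) \<le> 0" using a1 a2 a12 by (simp add: min_def)
    moreover have "log 2 t \<ge> 0" using t by simp
    ultimately show ?thesis by (simp add: c_def)
  qed
  have "(\<integral>\<^sup>+ x. ennreal (max (hbar \<epsilon>' R1 x) (hbar \<epsilon>' R2 x)) \<partial>map_pmf fst R1)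
      \<le> (\<integral>\<^sup>+ x. ennreal (hbar \<epsilon> R x) + ennreal c \<partial>map_pmf fst R1)"
  proof (intro nn_integral_mono_AE, unfold AE_measure_pmf_iff, intro ballI)
    fix x assume "x \<in> set_pmf (map_pmf fst R1)"
    then have px: "pmf (map_pmf fst R1) x > 0" by (simp add: pmf_positive)
    have px2: "pmf (map_pmf fst R2) x > 0" using px by (simp add: marg)
    have "hbar \<epsilon>' R1 x \<le> hbar \<epsilon> R x + c"
      using dirA1[OF px t e e' ee1] lm1 by (simp add: c_def)
    moreover have "hbar \<epsilon>' R2 x \<le> hbar \<epsilon> R x + c"
      using S.dirA1[OF px2 t e e' ee2] lm2 by (simp add: c_def)
    ultimately have "ennreal (max (hbar \<epsilon>' R1 x) (hbar \<epsilon>' R2 x)) \<le> ennreal (hbar \<epsilon> R x + c)"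
      by (intro ennreal_leI) simp
    then show "ennreal (max (hbar \<epsilon>' R1 x) (hbar \<epsilon>' R2 x)) \<le> ennreal (hbar \<epsilon> R x) + ennreal c"
      using hnn[OF px e] c0 by (simp add: ennreal_plus)
  qed
  also have "\<dots> = (\<integral>\<^sup>+ x. ennreal (hbar \<epsilon> R x) \<partial>map_pmf fst R1) + ennreal c"
    by (simp add: nn_integral_add measure_pmf.emeasure_space_1 del: nn_integral_map_pmf)
  finally have le: "(\<integral>\<^sup>+ x. ennreal (max (hbar \<epsilon>' R1 x) (hbar \<epsilon>' R2 x)) \<partial>map_pmf fst R1)
      \<le> (\<integral>\<^sup>+ x. ennreal (hbar \<epsilon> R x) \<partial>map_pmf fst R1) + ennreal c" .
  have "enn2real (\<integral>\<^sup>+ x. ennreal (max (hbar \<epsilon>' R1 x) (hbar \<epsilon>' R2 x)) \<partial>map_pmf fst R1)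
     \<le> enn2real ((\<integral>\<^sup>+ x. ennreal (hbar \<epsilon> R x) \<partial>map_pmf fst R1) + ennreal c)"
    using le hR_fin[OF e] by (intro enn2real_mono) (auto simp: less_top)
  also have "\<dots> = enn2real (\<integral>\<^sup>+ x. ennreal (hbar \<epsilon> R x) \<partial>map_pmf fst R1) + c"
    using hR_fin[OF e] c0 by (simp add: enn2real_plus less_top)
  finally show ?thesis unfolding SR_eq[OF e] SM_eq[OF e'] c_def .
qed

lemma antiR:
  assumes e: "0 < \<epsilon>" "\<epsilon> \<le> \<epsilon>'" "\<epsilon>' < 1"
  shows "(\<Sum>\<^sub>\<infinity> x\<in>A. pmf (map_pmf fst R) x * hbar \<epsilon>' R x) \<le> (\<Sum>\<^sub>\<infinity> x\<in>A. pmf (map_pmf fst R) x * hbar \<epsilon> R x)"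
proof -
  have e1: "0 < \<epsilon>" "\<epsilon> < 1" "0 < \<epsilon>'" "\<epsilon>' < 1" using e by auto
  have "(\<integral>\<^sup>+ x. ennreal (hbar \<epsilon>' R x) \<partial>map_pmf fst R1) \<le> (\<integral>\<^sup>+ x. ennreal (hbar \<epsilon> R x) \<partial>map_pmf fst R1)"
  proof (intro nn_integral_mono_AE, unfold AE_measure_pmf_iff, intro ballI)
    fix x assume "x \<in> set_pmf (map_pmf fst R1)"
    then have px: "pmf (map_pmf fst R) x > 0" by (simp add: pmf_positive margR)
    show "ennreal (hbar \<epsilon>' R x) \<le> ennreal (hbar \<epsilon> R x)"
      by (intro ennreal_leI hbar_anti[OF px e])
  qed
  then show ?thesis unfolding SR_eq[OF e1(1,2)] SR_eq[OF e1(3,4)]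
    using hR_fin[OF e1(1,2)] by (intro enn2real_mono) (auto simp: less_top)
qed

lemma antiM:
  assumes e: "0 < \<epsilon>" "\<epsilon> \<le> \<epsilon>'" "\<epsilon>' < 1"
  shows "(\<Sum>\<^sub>\<infinity> x\<in>A. pmf (map_pmf fst R) x * max (hbar \<epsilon>' R1 x) (hbar \<epsilon>' R2 x))
      \<le> (\<Sum>\<^sub>\<infinity> x\<in>A. pmf (map_pmf fst R) x * max (hbar \<epsilon> R1 x) (hbar \<epsilon> R2 x))"
proof -
  have e1: "0 < \<epsilon>" "\<epsilon> < 1" "0 < \<epsilon>'" "\<epsilon>' < 1" using e by auto
  have "(\<integral>\<^sup>+ x. ennreal (max (hbar \<epsilon>' R1 x) (hbar \<epsilon>' R2 x)) \<partial>map_pmf fst R1)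
     \<le> (\<integral>\<^sup>+ x. ennreal (max (hbar \<epsilon> R1 x) (hbar \<epsilon> R2 x)) \<partial>map_pmf fst R1)"
  proof (intro nn_integral_mono_AE, unfold AE_measure_pmf_iff, intro ballI)
    fix x assume "x \<in> set_pmf (map_pmf fst R1)"
    then have px: "pmf (map_pmf fst R1) x > 0" by (simp add: pmf_positive)
    have px2: "pmf (map_pmf fst R2) x > 0" using px by (simp add: marg)
    show "ennreal (max (hbar \<epsilon>' R1 x) (hbar \<epsilon>' R2 x)) \<le> ennreal (max (hbar \<epsilon> R1 x) (hbar \<epsilon> R2 x))"
      using hbar_anti[OF px e] hbar_anti[OF px2 e] by (intro ennreal_leI) auto
  qed
  then show ?thesis unfolding SM_eq[OF e1(1,2)] SM_eq[OF e1(3,4)]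
    using max_fin[OF e1(1,2)] by (intro enn2real_mono) (auto simp: less_top)
qed

lemma levelB:
  assumes t: "t \<ge> 1" and e: "0 < \<epsilon>" "\<epsilon> < 1"
  shows "(\<Sum>\<^sub>\<infinity> x\<in>A. pmf (map_pmf fst R) x * hbar \<epsilon> R x)
     \<le> (\<Sum>\<^sub>\<infinity> x\<in>A. pmf (map_pmf fst R) x * max (hbar (\<epsilon>/2) R1 x) (hbar (\<epsilon>/2) R2 x))
        + (log 2 t - log 2 (min \<alpha>1 \<alpha>2) + 1)
        + ((N * (u * (2 / (\<epsilon> * t)) + \<eta>) + (- log 2 (min \<alpha>1 \<alpha>2)) * (2 / (\<epsilon> * t)) + 1 / ln 2) / \<epsilon> + 2 / (\<epsilon> * t))"
proof -
  interpret S: mixsetup R2 R1 R \<alpha>2 \<alpha>1 by (rule symm)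
  have e2: "0 < \<epsilon>/2" "\<epsilon>/2 < 1" using e by auto
  define c where "c = log 2 t - log 2 (min \<alpha>1 \<alpha>2) + 1"
  define C0 where "C0 = - log 2 (min \<alpha>1 \<alpha>2)"
  define B where "B = {x. Dfun R1 R2 R \<alpha>1 \<alpha>2 t x > \<epsilon>/2}"
  define pB where "pB = measure (map_pmf fst R1) B"
  have pB: "pB \<le> 2 / (\<epsilon> * t)" unfolding pB_def B_def using t e by (intro pB) auto
  have pB0: "pB \<ge> 0" by (simp add: pB_def)
  have em: "emeasure (map_pmf fst R1) B = ennreal pB"
    by (simp only: pB_def measure_pmf.emeasure_eq_measure)
  have lm1: "log 2 (min \<alpha>1 \<alpha>2) \<le> log 2 \<alpha>1" using a1 a2 by (auto intro!: log_mono simp: min_def)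
  have lm2: "log 2 (min \<alpha>1 \<alpha>2) \<le> log 2 \<alpha>2" using a1 a2 by (auto intro!: log_mono simp: min_def)
  have C00: "C0 \<ge> 0" using a1 a2 a12 by (simp add: min_def C0_def)
  have c0: "c \<ge> 0"
  proof -
    have "log 2 t \<ge> 0" using t by simp
    then show ?thesis using C00 by (simp add: c_def C0_def)
  qed
  let ?E = "\<lambda>x. (\<integral>\<^sup>+ y. ennreal (FF R x y) \<partial>cnd R x)"
  let ?M = "\<lambda>x. ennreal (max (hbar (\<epsilon>/2) R1 x) (hbar (\<epsilon>/2) R2 x))"
  have "(\<integral>\<^sup>+ x. ennreal (hbar \<epsilon> R x) \<partial>map_pmf fst R1)
      \<le> (\<integral>\<^sup>+ x. ?M x + ennreal c + indicator B x * ennreal (hbar \<epsilon> R x) \<partial>map_pmf fst R1)"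
  proof (intro nn_integral_mono_AE, unfold AE_measure_pmf_iff, intro ballI)
    fix x assume "x \<in> set_pmf (map_pmf fst R1)"
    then have px: "pmf (map_pmf fst R1) x > 0" by (simp add: pmf_positive)
    show "ennreal (hbar \<epsilon> R x) \<le> ?M x + ennreal c + indicator B x * ennreal (hbar \<epsilon> R x)"
    proof (cases "x \<in> B")
      case True
      then show ?thesis by (simp add: add_increasing)
    next
      case False
      then have D: "Dfun R1 R2 R \<alpha>1 \<alpha>2 t x \<le> \<epsilon>/2" by (simp add: B_def)
      have "hbar \<epsilon> R x \<le> max (hbar (\<epsilon>/2) R1 x) (hbar (\<epsilon>/2) R2 x) + c"
        using dirB[OF px t e D[unfolded Dfun_def]] by (simp add: c_def)
      then have "ennreal (hbar \<epsilon> R x) \<le> ennreal (max (hbar (\<epsilon>/2) R1 x) (hbar (\<epsilon>/2) R2 x) + c)"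
        by (rule ennreal_leI)
      also have "\<dots> = ?M x + ennreal c" using hnn[OF px e2] c0 by (simp add: ennreal_plus le_max_iff_disj)
      finally show ?thesis using False by simp
    qed
  qed
  also have "\<dots> = (\<integral>\<^sup>+ x. ?M x \<partial>map_pmf fst R1) + ennreal c
       + (\<integral>\<^sup>+ x. indicator B x * ennreal (hbar \<epsilon> R x) \<partial>map_pmf fst R1)"
    by (simp add: nn_integral_add measure_pmf.emeasure_space_1 del: nn_integral_map_pmf)
  finally have main: "(\<integral>\<^sup>+ x. ennreal (hbar \<epsilon> R x) \<partial>map_pmf fst R1)
      \<le> (\<integral>\<^sup>+ x. ?M x \<partial>map_pmf fst R1) + ennreal c
       + (\<integral>\<^sup>+ x. indicator B x * ennreal (hbar \<epsilon> R x) \<partial>map_pmf fst R1)" .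
  define V where "V = N * (u * pB + \<eta>) + C0 * pB + 1 / ln 2"
  have V0: "V \<ge> 0" using Nu pB0 C00 by (simp add: V_def)
  have "(\<integral>\<^sup>+ x. indicator B x * ennreal (hbar \<epsilon> R x) \<partial>map_pmf fst R1)
     \<le> (\<integral>\<^sup>+ x. (indicator B x * ?E x) / ennreal \<epsilon> + indicator B x \<partial>map_pmf fst R1)"
  proof (intro nn_integral_mono_AE, unfold AE_measure_pmf_iff, intro ballI)
    fix x assume "x \<in> set_pmf (map_pmf fst R1)"
    then have px: "pmf (map_pmf fst R) x > 0" by (simp add: pmf_positive margR)
    interpret H: hsetup R x \<epsilon> using px e by unfold_locales auto
    have "indicator B x * ennreal (hbar \<epsilon> R x) \<le> indicator B x * (?E x / ennreal \<epsilon> + 1)"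
      by (intro mult_left_mono H.hbar_markov) simp
    also have "\<dots> = (indicator B x * ?E x) / ennreal \<epsilon> + indicator B x"
      by (simp add: distrib_left ennreal_times_divide)
    finally show "indicator B x * ennreal (hbar \<epsilon> R x) \<le> (indicator B x * ?E x) / ennreal \<epsilon> + indicator B x" .
  qed
  also have "\<dots> = (\<integral>\<^sup>+ x. indicator B x * ?E x \<partial>map_pmf fst R1) / ennreal \<epsilon> + ennreal pB"
    by (simp add: nn_integral_add nn_integral_divide pB_def measure_pmf.emeasure_eq_measure del: nn_integral_map_pmf)
  also have "\<dots> \<le> ennreal V / ennreal \<epsilon> + ennreal pB"
  proof -
    have k1: "ennreal \<alpha>1 * ((\<integral>\<^sup>+ z. indicator B (fst z) * ennreal (FF R1 (fst z) (snd z)) \<partial>R1)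
      + ennreal (- log 2 \<alpha>1) * emeasure (map_pmf fst R1) B + ennreal (1 / ln 2)) \<le> ennreal \<alpha>1 * ennreal V"
    proof (intro mult_left_mono)
      have "ennreal (- log 2 \<alpha>1) * emeasure (map_pmf fst R1) B = ennreal (- log 2 \<alpha>1) * ennreal pB"
        by (simp only: em)
      also have "\<dots> = ennreal (- log 2 \<alpha>1 * pB)"
        using a1 a2 a12 pB0 by (intro ennreal_mult[symmetric]) auto
      also have "\<dots> \<le> ennreal (C0 * pB)" using lm1 pB0 by (intro ennreal_leI mult_right_mono) (auto simp: C0_def)
      finally have "ennreal (- log 2 \<alpha>1) * emeasure (map_pmf fst R1) B \<le> ennreal (C0 * pB)" .
      then have "(\<integral>\<^sup>+ z. indicator B (fst z) * ennreal (FF R1 (fst z) (snd z)) \<partial>R1)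
        + ennreal (- log 2 \<alpha>1) * emeasure (map_pmf fst R1) B + ennreal (1 / ln 2)
        \<le> ennreal (N * (u * pB + \<eta>)) + ennreal (C0 * pB) + ennreal (1 / ln 2)"
        using UI1[of B] by (intro add_mono) (auto simp: pB_def)
      also have "\<dots> = ennreal V" using Nu pB0 C00 by (simp add: V_def ennreal_plus)
      finally show "(\<integral>\<^sup>+ z. indicator B (fst z) * ennreal (FF R1 (fst z) (snd z)) \<partial>R1)
        + ennreal (- log 2 \<alpha>1) * emeasure (map_pmf fst R1) B + ennreal (1 / ln 2) \<le> ennreal V" .
    qed simp
    have k2: "ennreal \<alpha>2 * ((\<integral>\<^sup>+ z. indicator B (fst z) * ennreal (FF R2 (fst z) (snd z)) \<partial>R2)
      + ennreal (- log 2 \<alpha>2) * emeasure (map_pmf fst R1) B + ennreal (1 / ln 2)) \<le> ennreal \<alpha>2 * ennreal V"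
    proof (intro mult_left_mono)
      have "ennreal (- log 2 \<alpha>2) * emeasure (map_pmf fst R1) B = ennreal (- log 2 \<alpha>2) * ennreal pB"
        by (simp only: em)
      also have "\<dots> = ennreal (- log 2 \<alpha>2 * pB)"
        using a1 a2 a12 pB0 by (intro ennreal_mult[symmetric]) auto
      also have "\<dots> \<le> ennreal (C0 * pB)" using lm2 pB0 by (intro ennreal_leI mult_right_mono) (auto simp: C0_def)
      finally have "ennreal (- log 2 \<alpha>2) * emeasure (map_pmf fst R1) B \<le> ennreal (C0 * pB)" .
      then have "(\<integral>\<^sup>+ z. indicator B (fst z) * ennreal (FF R2 (fst z) (snd z)) \<partial>R2)
        + ennreal (- log 2 \<alpha>2) * emeasure (map_pmf fst R1) B + ennreal (1 / ln 2)
        \<le> ennreal (N * (u * pB + \<eta>)) + ennreal (C0 * pB) + ennreal (1 / ln 2)"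
        using UI2[of B] by (intro add_mono) (auto simp: pB_def)
      also have "\<dots> = ennreal V" using Nu pB0 C00 by (simp add: V_def ennreal_plus)
      finally show "(\<integral>\<^sup>+ z. indicator B (fst z) * ennreal (FF R2 (fst z) (snd z)) \<partial>R2)
        + ennreal (- log 2 \<alpha>2) * emeasure (map_pmf fst R1) B + ennreal (1 / ln 2) \<le> ennreal V" .
    qed simp
    have "(\<integral>\<^sup>+ x. indicator B x * ?E x \<partial>map_pmf fst R1) \<le> ennreal \<alpha>1 * ennreal V + ennreal \<alpha>2 * ennreal V"
      by (rule order_trans[OF locE add_mono[OF k1 k2]])
    also have "\<dots> = ennreal V"
    proof -
      have "ennreal \<alpha>1 * ennreal V + ennreal \<alpha>2 * ennreal V = (ennreal \<alpha>1 + ennreal \<alpha>2) * ennreal V"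
        by (simp add: distrib_right)
      also have "ennreal \<alpha>1 + ennreal \<alpha>2 = 1" using a1 a2 a12 by (simp add: ennreal_plus[symmetric] del: ennreal_plus)
      finally show ?thesis by simp
    qed
    finally show ?thesis by (intro add_right_mono divide_right_mono_ennreal)
  qed
  also have "\<dots> = ennreal (V / \<epsilon> + pB)" using V0 pB0 e by (simp add: divide_ennreal ennreal_plus)
  finally have bad: "(\<integral>\<^sup>+ x. indicator B x * ennreal (hbar \<epsilon> R x) \<partial>map_pmf fst R1) \<le> ennreal (V / \<epsilon> + pB)" .
  have "(\<integral>\<^sup>+ x. ennreal (hbar \<epsilon> R x) \<partial>map_pmf fst R1)
       \<le> (\<integral>\<^sup>+ x. ?M x \<partial>map_pmf fst R1) + ennreal c + ennreal (V / \<epsilon> + pB)"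
    using main bad by (meson add_left_mono order_trans)
  also have "\<dots> = ennreal (enn2real (\<integral>\<^sup>+ x. ?M x \<partial>map_pmf fst R1) + c + (V / \<epsilon> + pB))"
    using max_fin[OF e2] c0 V0 pB0 e
    by (simp add: ennreal_plus ennreal_enn2real less_top)
  finally have "enn2real (\<integral>\<^sup>+ x. ennreal (hbar \<epsilon> R x) \<partial>map_pmf fst R1)
       \<le> enn2real (\<integral>\<^sup>+ x. ?M x \<partial>map_pmf fst R1) + c + (V / \<epsilon> + pB)"
  proof -
    assume le: "(\<integral>\<^sup>+ x. ennreal (hbar \<epsilon> R x) \<partial>map_pmf fst R1)
       \<le> ennreal (enn2real (\<integral>\<^sup>+ x. ?M x \<partial>map_pmf fst R1) + c + (V / \<epsilon> + pB))"
    have "enn2real (\<integral>\<^sup>+ x. ennreal (hbar \<epsilon> R x) \<partial>map_pmf fst R1)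
      \<le> enn2real (ennreal (enn2real (\<integral>\<^sup>+ x. ?M x \<partial>map_pmf fst R1) + c + (V / \<epsilon> + pB)))"
      by (rule enn2real_mono[OF le]) simp
    moreover have tot0: "0 \<le> enn2real (\<integral>\<^sup>+ x. ?M x \<partial>map_pmf fst R1) + c + (V / \<epsilon> + pB)"
      using c0 V0 pB0 e by simp
    ultimately show ?thesis by (simp only: enn2real_ennreal[OF tot0])
  qed
  also have "V / \<epsilon> + pB \<le> (N * (u * (2 / (\<epsilon> * t)) + \<eta>) + C0 * (2 / (\<epsilon> * t)) + 1 / ln 2) / \<epsilon> + 2 / (\<epsilon> * t)"
  proof -
    have "V \<le> N * (u * (2 / (\<epsilon> * t)) + \<eta>) + C0 * (2 / (\<epsilon> * t)) + 1 / ln 2"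
      unfolding V_def using pB Nu C00 by (intro add_mono mult_left_mono order_refl) auto
    then show ?thesis using pB e by (intro add_mono divide_right_mono) auto
  qed
  finally show ?thesis unfolding SR_eq[OF e] SM_eq[OF e2] c_def C0_def by simp
qed

end

lemma limsup_le_shift:
  fixes a b e :: "nat \<Rightarrow> real"
  assumes ev: "eventually (\<lambda>n. a n \<le> b n + e n) sequentially" and lim: "e \<longlonglongrightarrow> l"
  shows "limsup (\<lambda>n. ereal (a n)) \<le> limsup (\<lambda>n. ereal (b n)) + ereal l"
proof -
  have "limsup (\<lambda>n. ereal (a n)) \<le> limsup (\<lambda>n. ereal (b n) + ereal (e n))"
    by (rule Limsup_mono) (use ev in \<open>auto elim!: eventually_mono\<close>)
  also have "\<dots> \<le> limsup (\<lambda>n. ereal (b n)) + limsup (\<lambda>n. ereal (e n))"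
    by (rule ereal_limsup_add_mono)
  also have "limsup (\<lambda>n. ereal (e n)) = ereal l"
    using lim by (intro lim_imp_Limsup) (auto simp: tendsto_ereal)
  finally show ?thesis .
qed

lemma anti_lim:
  fixes h :: "real \<Rightarrow> ereal"
  assumes anti: "\<And>x y. 0 < x \<Longrightarrow> x \<le> y \<Longrightarrow> y < 1 \<Longrightarrow> h y \<le> h x"
  shows "(h \<longlongrightarrow> (SUP x\<in>{0<..<1}. h x)) (at_right 0)"
proof (rule order_tendstoI)
  fix a assume "a < (SUP x\<in>{0<..<1}. h x)"
  then obtain x0 where x0: "x0 \<in> {0<..<1}" "a < h x0" by (auto simp: less_SUP_iff)
  show "eventually (\<lambda>x. a < h x) (at_right 0)"
    unfolding eventually_at_right_field
  proof (intro exI[of _ x0] conjI allI impI)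
    show "0 < x0" using x0 by simp
    fix y :: real assume "0 < y" "y < x0"
    then have "h x0 \<le> h y" using x0 by (intro anti) auto
    then show "a < h y" using x0 by simp
  qed
next
  fix a assume a: "(SUP x\<in>{0<..<1}. h x) < a"
  show "eventually (\<lambda>x. h x < a) (at_right 0)"
    unfolding eventually_at_right_field
  proof (intro exI[of _ 1] conjI allI impI)
    fix y :: real assume "0 < y" "y < 1"
    then have "h y \<le> (SUP x\<in>{0<..<1}. h x)" by (intro SUP_upper) auto
    then show "h y < a" using a by simp
  qed simp
qed

lemma nn_le_infsum:
  fixes g :: "'a \<Rightarrow> real"
  assumes g0: "\<And>w. g w \<ge> 0"
  shows "(\<integral>\<^sup>+ w. ennreal (g w) * indicator S w \<partial>count_space UNIV) \<le> (\<Sum>\<^sub>\<infinity> w\<in>S. ennreal (g w))"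
proof (cases "(\<Sum>\<^sub>\<infinity> w\<in>S. ennreal (g w)) = \<infinity>")
  case True then show ?thesis by simp
next
  case False
  define I where "I = (\<Sum>\<^sub>\<infinity> w\<in>S. ennreal (g w))"
  have Isup: "I = (SUP F\<in>{F. finite F \<and> F\<subseteq>S}. sum (\<lambda>w. ennreal (g w)) F)"
    unfolding I_def by (rule nonneg_infsum_complete) simp
  have fs: "sum g F \<le> enn2real I" if "finite F" "F \<subseteq> S" for F
  proof -
    have "ennreal (sum g F) = sum (\<lambda>w. ennreal (g w)) F" using g0 by (simp add: sum_ennreal)
    also have "\<dots> \<le> I" unfolding Isup using that by (intro SUP_upper) auto
    finally have "ennreal (sum g F) \<le> I" .
    then have "enn2real (ennreal (sum g F)) \<le> enn2real I"
      using False by (intro enn2real_mono) (auto simp: I_def less_top)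
    then show ?thesis using g0 by (simp add: sum_nonneg)
  qed
  have as: "Infinite_Set_Sum.abs_summable_on g S"
    by (rule abs_summable_finite_sumsI[where B="enn2real I"]) (use fs g0 in auto)
  have sm: "g summable_on S"
  proof -
    have "(\<lambda>x. norm (g x)) summable_on S" using as abs_summable_equivalent[of g S] by simp
    moreover have "(\<lambda>x. norm (g x)) = g" using g0 by (simp add: fun_eq_iff)
    ultimately show ?thesis by simp
  qed
  have "(\<integral>\<^sup>+ w. ennreal (g w) * indicator S w \<partial>count_space UNIV) = (\<integral>\<^sup>+ w. ennreal (g w) \<partial>count_space S)"
    by (simp add: nn_integral_count_space_indicator)
  also have "\<dots> = ennreal (infsetsum g S)"
    using as g0 by (intro nn_integral_conv_infsetsum) auto
  also have "infsetsum g S = infsum g S" using as by (rule infsetsum_infsum)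
  also have "ennreal (infsum g S) = infsum (ennreal \<circ> g) S"
    by (rule infsum_comm_additive_general[symmetric]) (use g0 sm in \<open>auto simp: sum_ennreal\<close>)
  finally show ?thesis by (simp add: o_def)
qed

lemma UI_bound:
  fixes P :: "nat \<Rightarrow> ('a \<times> 'b) pmf"
  assumes ui: "unif_integrable P" and \<eta>: "\<eta> > 0"
  shows "\<exists>u\<ge>0. \<forall>n\<ge>1. \<forall>B. (\<integral>\<^sup>+ z. indicator B (fst z) * ennreal (FF (P n) (fst z) (snd z)) \<partial>P n)
            \<le> ennreal (real n * (u * measure (map_pmf fst (P n)) B + \<eta>))"
proof -
  define X where "X u = (SUP n\<in>{1..}. (\<Sum>\<^sub>\<infinity> z\<in>{z. \<bar>z\<bar> \<ge> u}. ennreal (pmf (Zdist P n) z * \<bar>z\<bar>)))" for u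
  have "(X \<longlongrightarrow> 0) at_top" using ui unfolding unif_integrable_def X_def .
  then have "eventually (\<lambda>u. X u < ennreal \<eta>) at_top"
    using \<eta> by (intro order_tendstoD(2)) auto
  then obtain U where U: "\<And>u. u \<ge> U \<Longrightarrow> X u < ennreal \<eta>"
    by (auto simp: eventually_at_top_linorder)
  define u where "u = max U 0"
  have u0: "u \<ge> 0" and Xu: "X u < ennreal \<eta>" using U[of u] by (auto simp: u_def)
  show ?thesis
  proof (intro exI[of _ u] conjI u0 allI impI)
    fix n :: nat and B assume n: "n \<ge> 1"
    define Z where "Z z = (1 / real n) * log 2 (1 / condXY (P n) (fst z) (snd z))" for z
    have Zd: "Zdist P n = map_pmf Z (P n)"
      unfolding Zdist_def Z_def by (intro map_pmf_cong) (auto simp: case_prod_beta)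
    let ?S = "{w::real. \<bar>w\<bar> \<ge> u}"
    have "(\<integral>\<^sup>+ z. ennreal \<bar>Z z\<bar> * indicator ?S (Z z) \<partial>P n)
        = (\<integral>\<^sup>+ w. ennreal \<bar>w\<bar> * indicator ?S w \<partial>map_pmf Z (P n))" by simp
    also have "\<dots> = (\<integral>\<^sup>+ w. ennreal (pmf (Zdist P n) w * \<bar>w\<bar>) * indicator ?S w \<partial>count_space UNIV)"
      unfolding nn_integral_measure_pmf Zd
      by (intro nn_integral_cong) (simp add: ennreal_mult mult.assoc)
    also have "\<dots> \<le> (\<Sum>\<^sub>\<infinity> w\<in>?S. ennreal (pmf (Zdist P n) w * \<bar>w\<bar>))"
      by (rule nn_le_infsum) simp
    also have "\<dots> \<le> X u" unfolding X_def using n by (intro SUP_upper) auto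
    finally have tailZ: "(\<integral>\<^sup>+ z. ennreal \<bar>Z z\<bar> * indicator ?S (Z z) \<partial>P n) \<le> ennreal \<eta>"
      using Xu by simp
    have "(\<integral>\<^sup>+ z. indicator B (fst z) * ennreal (FF (P n) (fst z) (snd z)) \<partial>P n)
       \<le> (\<integral>\<^sup>+ z. ennreal (real n) * (ennreal u * indicator B (fst z) + ennreal \<bar>Z z\<bar> * indicator ?S (Z z)) \<partial>P n)"
    proof (intro nn_integral_mono)
      fix z
      have FZ: "FF (P n) (fst z) (snd z) = real n * Z z" using n by (simp add: Z_def FF_def)
      have "ennreal (Z z) \<le> ennreal u * indicator B (fst z) + ennreal \<bar>Z z\<bar> * indicator ?S (Z z)" if "fst z \<in> B"
      proof (cases "u \<le> \<bar>Z z\<bar>")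
        case True then show ?thesis using that by (simp add: add_increasing ennreal_leI)
      next
        case False then show ?thesis using that by (simp add: add_increasing2 ennreal_leI)
      qed
      then have "indicator B (fst z) * ennreal (Z z) \<le> ennreal u * indicator B (fst z) + ennreal \<bar>Z z\<bar> * indicator ?S (Z z)"
        by (cases "fst z \<in> B") auto
      then have "ennreal (real n) * (indicator B (fst z) * ennreal (Z z))
         \<le> ennreal (real n) * (ennreal u * indicator B (fst z) + ennreal \<bar>Z z\<bar> * indicator ?S (Z z))"
        by (rule mult_left_mono) simp
      moreover have "indicator B (fst z) * ennreal (FF (P n) (fst z) (snd z)) = ennreal (real n) * (indicator B (fst z) * ennreal (Z z))"
        unfolding FZ by (simp add: ennreal_mult' mult.left_commute)
      ultimately show "indicator B (fst z) * ennreal (FF (P n) (fst z) (snd z))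
         \<le> ennreal (real n) * (ennreal u * indicator B (fst z) + ennreal \<bar>Z z\<bar> * indicator ?S (Z z))" by simp
    qed
    also have "\<dots> = ennreal (real n) * (ennreal u * emeasure (P n) (fst -` B) + (\<integral>\<^sup>+ z. ennreal \<bar>Z z\<bar> * indicator ?S (Z z) \<partial>P n))"
    proof -
      have "(\<integral>\<^sup>+ z. indicator B (fst z) \<partial>P n) = emeasure (P n) (fst -` B)"
      proof -
        have "(\<lambda>z. indicator B (fst z) :: ennreal) = indicator (fst -` B)" by (auto simp: indicator_def fun_eq_iff)
        then have "(\<integral>\<^sup>+ z. indicator B (fst z) \<partial>P n) = (\<integral>\<^sup>+ z. indicator (fst -` B) z \<partial>P n)" by (rule arg_cong[where f="nn_integral (measure_pmf (P n))"])
        also have "\<dots> = emeasure (P n) (fst -` B)" by (rule nn_integral_indicator) simp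
        finally show ?thesis .
      qed
      then show ?thesis by (simp add: nn_integral_cmult nn_integral_add)
    qed
    also have "\<dots> \<le> ennreal (real n) * (ennreal u * ennreal (measure (map_pmf fst (P n)) B) + ennreal \<eta>)"
      using tailZ by (intro mult_left_mono add_mono) (auto simp: measure_pmf.emeasure_eq_measure pmf_map measure_map_pmf)
    also have "\<dots> = ennreal (real n * (u * measure (map_pmf fst (P n)) B + \<eta>))"
      using u0 \<eta> by (simp add: ennreal_mult ennreal_plus)
    finally show "(\<integral>\<^sup>+ z. indicator B (fst z) * ennreal (FF (P n) (fst z) (snd z)) \<partial>P n)
            \<le> ennreal (real n * (u * measure (map_pmf fst (P n)) B + \<eta>))" .
  qed
qed

lemma logn_lim: "(\<lambda>n::nat. log 2 (real n) / real n) \<longlonglongrightarrow> 0"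
  by real_asymp

lemma inv_lim: "(\<lambda>n::nat. 1 / real n) \<longlonglongrightarrow> 0"
  by real_asymp

lemma inv2_lim: "(\<lambda>n::nat. 1 / (real n)^2) \<longlonglongrightarrow> 0"
  by real_asymp

theorem theorem13:
  fixes P1 P2 P :: "nat \<Rightarrow> ('x::countable list \<times> 'y::countable list) pmf"
    and \<alpha>1 \<alpha>2 :: real
  assumes src1: "is_source P1" and src2: "is_source P2"
    and ui1: "unif_integrable P1" and ui2: "unif_integrable P2"
    and marg: "\<forall>n. map_pmf fst (P1 n) = map_pmf fst (P2 n)"
    and a1: "\<alpha>1 > 0" and a2: "\<alpha>2 > 0" and a12: "\<alpha>1 + \<alpha>2 = 1"
    and mix: "\<forall>n z. pmf (P n) z = \<alpha>1 * pmf (P1 n) z + \<alpha>2 * pmf (P2 n) z"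
  shows "Hs P = Lim (at_right (0::real)) (\<lambda>\<epsilon>. limsup (\<lambda>n. ereal
            ((\<Sum>\<^sub>\<infinity> x\<in>{xs. length xs = n}. pmf (map_pmf fst (P n)) x *
                 max (hbar \<epsilon> (P1 n) x) (hbar \<epsilon> (P2 n) x)) / real n)))"
proof -
  define am where "am = min \<alpha>1 \<alpha>2"
  have am0: "am > 0" using a1 a2 by (simp add: am_def)
  have am1: "am \<le> \<alpha>1" "am \<le> \<alpha>2" by (auto simp: am_def)
  have NS: "\<exists>u. \<forall>n\<ge>1. nsetup (P1 n) (P2 n) (P n) \<alpha>1 \<alpha>2 {xs. length xs = n} (real n) u \<eta>" if \<eta>: "\<eta> > 0" for \<eta>
  proof -
    obtain u1 where u1: "u1 \<ge> 0" "\<And>n B. n \<ge> 1 \<Longrightarrow> (\<integral>\<^sup>+ z. indicator B (fst z) * ennreal (FF (P1 n) (fst z) (snd z)) \<partial>P1 n)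
            \<le> ennreal (real n * (u1 * measure (map_pmf fst (P1 n)) B + \<eta>))"
      using UI_bound[OF ui1 \<eta>] by blast
    obtain u2 where u2: "u2 \<ge> 0" "\<And>n B. n \<ge> 1 \<Longrightarrow> (\<integral>\<^sup>+ z. indicator B (fst z) * ennreal (FF (P2 n) (fst z) (snd z)) \<partial>P2 n)
            \<le> ennreal (real n * (u2 * measure (map_pmf fst (P2 n)) B + \<eta>))"
      using UI_bound[OF ui2 \<eta>] by blast
    define u where "u = max u1 u2"
    show ?thesis
    proof (intro exI[of _ u] allI impI)
      fix n :: nat assume n: "n \<ge> 1"
      have inA: "pmf (map_pmf fst (P1 n)) x > 0" if "x \<in> {xs. length xs = n}" for x
        using src1 that unfolding is_source_def by auto
      have outA: "pmf (map_pmf fst (P1 n)) x = 0" if "x \<notin> {xs. length xs = n}" for x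
      proof -
        have "set_pmf (P1 n) \<subseteq> {(xs, ys). length xs = n \<and> length ys = n}"
          using src1 unfolding is_source_def by auto
        then have "x \<notin> set_pmf (map_pmf fst (P1 n))" using that by auto
        then show ?thesis by (meson set_pmf_iff)
      qed
      have UI1: "(\<integral>\<^sup>+ z. indicator B (fst z) * ennreal (FF (P1 n) (fst z) (snd z)) \<partial>P1 n)
            \<le> ennreal (real n * (u * measure (map_pmf fst (P1 n)) B + \<eta>))" for B
      proof -
        have "real n * (u1 * measure (map_pmf fst (P1 n)) B + \<eta>) \<le> real n * (u * measure (map_pmf fst (P1 n)) B + \<eta>)"
          by (intro mult_left_mono add_right_mono mult_right_mono) (auto simp: u_def)
        then show ?thesis using u1(2)[OF n, of B] by (meson ennreal_leI order_trans)
      qed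
      have UI2: "(\<integral>\<^sup>+ z. indicator B (fst z) * ennreal (FF (P2 n) (fst z) (snd z)) \<partial>P2 n)
            \<le> ennreal (real n * (u * measure (map_pmf fst (P1 n)) B + \<eta>))" for B
      proof -
        have mm: "measure (map_pmf fst (P2 n)) B = measure (map_pmf fst (P1 n)) B" using marg by simp
        have "u2 * measure (map_pmf fst (P1 n)) B \<le> u * measure (map_pmf fst (P1 n)) B"
          by (intro mult_right_mono) (auto simp: u_def simp del: measure_map_pmf)
        then have "real n * (u2 * measure (map_pmf fst (P2 n)) B + \<eta>) \<le> real n * (u * measure (map_pmf fst (P1 n)) B + \<eta>)"
          unfolding mm by (intro mult_left_mono) auto
        then show ?thesis using u2(2)[OF n, of B] by (meson ennreal_leI order_trans)
      qed
      show "nsetup (P1 n) (P2 n) (P n) \<alpha>1 \<alpha>2 {xs. length xs = n} (real n) u \<eta>"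
        by unfold_locales (use marg a1 a2 a12 mix inA outA UI1 UI2 u1 u2 \<eta> in \<open>auto simp: u_def\<close>)
    qed
  qed
  define L where "L \<epsilon> n = Hs_eps \<epsilon> P n / real n" for \<epsilon> n
  define M where "M \<epsilon> n = (\<Sum>\<^sub>\<infinity> x\<in>{xs. length xs = n}. pmf (map_pmf fst (P n)) x *
                 max (hbar \<epsilon> (P1 n) x) (hbar \<epsilon> (P2 n) x)) / real n" for \<epsilon> n
  define g where "g \<epsilon> = limsup (\<lambda>n. ereal (L \<epsilon> n))" for \<epsilon>
  define k where "k \<epsilon> = limsup (\<lambda>n. ereal (M \<epsilon> n))" for \<epsilon>
  obtain u0 where u0: "\<And>n. n \<ge> 1 \<Longrightarrow> nsetup (P1 n) (P2 n) (P n) \<alpha>1 \<alpha>2 {xs. length xs = n} (real n) u0 1"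
    using NS[of 1] by auto
  have antiL: "L \<epsilon>' n \<le> L \<epsilon> n" if "0 < \<epsilon>" "\<epsilon> \<le> \<epsilon>'" "\<epsilon>' < 1" "n \<ge> 1" for \<epsilon> \<epsilon>' n
  proof -
    interpret nsetup "P1 n" "P2 n" "P n" \<alpha>1 \<alpha>2 "{xs. length xs = n}" "real n" u0 1 using u0 that by auto
    show ?thesis unfolding L_def Hs_eps_def using antiR[OF that(1-3)] by (intro divide_right_mono) auto
  qed
  have antiM': "M \<epsilon>' n \<le> M \<epsilon> n" if "0 < \<epsilon>" "\<epsilon> \<le> \<epsilon>'" "\<epsilon>' < 1" "n \<ge> 1" for \<epsilon> \<epsilon>' n
  proof -
    interpret nsetup "P1 n" "P2 n" "P n" \<alpha>1 \<alpha>2 "{xs. length xs = n}" "real n" u0 1 using u0 that by auto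
    show ?thesis unfolding M_def using antiM[OF that(1-3)] by (intro divide_right_mono) auto
  qed
  have antig: "g \<epsilon>' \<le> g \<epsilon>" if "0 < \<epsilon>" "\<epsilon> \<le> \<epsilon>'" "\<epsilon>' < 1" for \<epsilon> \<epsilon>'
    unfolding g_def by (intro Limsup_mono) (use antiL[OF that] in \<open>auto simp: eventually_sequentially intro!: exI[of _ 1]\<close>)
  have antik: "k \<epsilon>' \<le> k \<epsilon>" if "0 < \<epsilon>" "\<epsilon> \<le> \<epsilon>'" "\<epsilon>' < 1" for \<epsilon> \<epsilon>'
    unfolding k_def by (intro Limsup_mono) (use antiM'[OF that] in \<open>auto simp: eventually_sequentially intro!: exI[of _ 1]\<close>)
  have kle: "k \<epsilon>' \<le> g (am * \<epsilon>' / 2)" if e': "0 < \<epsilon>'" "\<epsilon>' < 1" for \<epsilon>'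
  proof -
    define \<epsilon> where "\<epsilon> = am * \<epsilon>' / 2"
    have am2: "am \<le> 1/2" using a12 by (simp add: am_def)
    have e: "0 < \<epsilon>" "\<epsilon> < 1"
    proof -
      show "0 < \<epsilon>" using am0 e' by (simp add: \<epsilon>_def)
      have "am * \<epsilon>' \<le> 1/2 * 1" using am2 e' am0 by (intro mult_mono) auto
      then show "\<epsilon> < 1" by (simp add: \<epsilon>_def)
    qed
    define e where "e n = log 2 (real n) / real n + (1 - log 2 am) * (1 / real n)" for n :: nat
    have ev: "eventually (\<lambda>n. M \<epsilon>' n \<le> L \<epsilon> n + e n) sequentially"
      unfolding eventually_sequentially
    proof (intro exI[of _ "max 1 (nat \<lceil>2 / \<epsilon>'\<rceil>)"] allI impI)
      fix n :: nat assume n: "n \<ge> max 1 (nat \<lceil>2 / \<epsilon>'\<rceil>)"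
      then have n1: "n \<ge> 1" and n2: "real n \<ge> 2 / \<epsilon>'" by (auto simp: nat_le_iff ceiling_le_iff)
      interpret nsetup "P1 n" "P2 n" "P n" \<alpha>1 \<alpha>2 "{xs. length xs = n}" "real n" u0 1 using u0 n1 by auto
      have inv: "1 / real n \<le> \<epsilon>' / 2" using n2 e' n1 by (simp add: field_simps)
      have ee: "\<alpha> * (\<epsilon>' - 1 / real n) \<ge> \<epsilon>" if "am \<le> \<alpha>" for \<alpha>
      proof -
        have "am * (\<epsilon>' / 2) \<le> \<alpha> * (\<epsilon>' - 1 / real n)"
          using that inv e' am0 by (intro mult_mono) auto
        then show ?thesis by (simp add: \<epsilon>_def)
      qed
      have "(\<Sum>\<^sub>\<infinity> x\<in>{xs. length xs = n}. pmf (map_pmf fst (P n)) x * max (hbar \<epsilon>' (P1 n) x) (hbar \<epsilon>' (P2 n) x))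
         \<le> Hs_eps \<epsilon> P n + (log 2 (real n) - log 2 am + 1)"
        unfolding Hs_eps_def am_def using levelA[of "real n" \<epsilon> \<epsilon>'] e e' n1 ee am1 by auto
      then have "M \<epsilon>' n \<le> (Hs_eps \<epsilon> P n + (log 2 (real n) - log 2 am + 1)) / real n"
        unfolding M_def using n1 by (intro divide_right_mono) auto
      also have "\<dots> = L \<epsilon> n + e n" unfolding L_def e_def using n1 by (simp add: field_simps)
      finally show "M \<epsilon>' n \<le> L \<epsilon> n + e n" .
    qed
    have lim: "e \<longlonglongrightarrow> 0 + (1 - log 2 am) * 0"
      unfolding e_def by (intro tendsto_intros logn_lim inv_lim)
    have "k \<epsilon>' \<le> g \<epsilon> + ereal 0"
      unfolding k_def g_def by (rule limsup_le_shift[OF ev]) (use lim in simp)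
    then show ?thesis by (simp add: \<epsilon>_def)
  qed
  have gle: "g \<epsilon> \<le> k (\<epsilon> / 2)" if e: "0 < \<epsilon>" "\<epsilon> < 1" for \<epsilon>
  proof (rule ereal_le_epsilon2)
    fix \<delta> :: real assume \<delta>: "0 < \<delta>"
    define \<eta> where "\<eta> = \<delta> * \<epsilon>"
    have \<eta>0: "\<eta> > 0" using \<delta> e by (simp add: \<eta>_def)
    obtain u where u: "\<And>n. n \<ge> 1 \<Longrightarrow> nsetup (P1 n) (P2 n) (P n) \<alpha>1 \<alpha>2 {xs. length xs = n} (real n) u \<eta>"
      using NS[OF \<eta>0] by auto
    define C0 where "C0 = - log 2 am"
    define K1 where "K1 = 1 - log 2 am + 2 * u / \<epsilon>^2 + 1 / (\<epsilon> * ln 2)"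
    define K2 where "K2 = 2 * C0 / \<epsilon>^2 + 2 / \<epsilon>"
    define e where "e n = log 2 (real n) / real n + K1 * (1 / real n) + K2 * (1 / real n)^2 + \<eta> / \<epsilon>" for n :: nat
    have ev: "eventually (\<lambda>n. L \<epsilon> n \<le> M (\<epsilon>/2) n + e n) sequentially"
      unfolding eventually_sequentially
    proof (intro exI[of _ 1] allI impI)
      fix n :: nat assume n1: "n \<ge> 1"
      interpret nsetup "P1 n" "P2 n" "P n" \<alpha>1 \<alpha>2 "{xs. length xs = n}" "real n" u \<eta> using u n1 by auto
      have "Hs_eps \<epsilon> P n
         \<le> (\<Sum>\<^sub>\<infinity> x\<in>{xs. length xs = n}. pmf (map_pmf fst (P n)) x * max (hbar (\<epsilon>/2) (P1 n) x) (hbar (\<epsilon>/2) (P2 n) x))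
        + (log 2 (real n) - log 2 am + 1)
        + ((real n * (u * (2 / (\<epsilon> * real n)) + \<eta>) + C0 * (2 / (\<epsilon> * real n)) + 1 / ln 2) / \<epsilon> + 2 / (\<epsilon> * real n))"
        unfolding Hs_eps_def am_def C0_def using levelB[of "real n" \<epsilon>] e n1 by auto
      then have "L \<epsilon> n \<le> (\<Sum>\<^sub>\<infinity> x\<in>{xs. length xs = n}. pmf (map_pmf fst (P n)) x * max (hbar (\<epsilon>/2) (P1 n) x) (hbar (\<epsilon>/2) (P2 n) x)) / real n
        + ((log 2 (real n) - log 2 am + 1)
        + ((real n * (u * (2 / (\<epsilon> * real n)) + \<eta>) + C0 * (2 / (\<epsilon> * real n)) + 1 / ln 2) / \<epsilon> + 2 / (\<epsilon> * real n))) / real n"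
        unfolding L_def using n1 by (simp add: divide_right_mono add_divide_distrib[symmetric])
      also have "((log 2 (real n) - log 2 am + 1)
        + ((real n * (u * (2 / (\<epsilon> * real n)) + \<eta>) + C0 * (2 / (\<epsilon> * real n)) + 1 / ln 2) / \<epsilon> + 2 / (\<epsilon> * real n))) / real n
        = e n"
        unfolding e_def K1_def K2_def C0_def using n1 e by (simp add: field_simps power2_eq_square)
      finally show "L \<epsilon> n \<le> M (\<epsilon>/2) n + e n" unfolding M_def .
    qed
    have lim: "e \<longlonglongrightarrow> 0 + K1 * 0 + K2 * 0 + \<eta> / \<epsilon>"
      unfolding e_def by (intro tendsto_intros logn_lim inv_lim) (use inv_lim in \<open>simp add: power_one_over[symmetric] inv2_lim\<close>)
    have "g \<epsilon> \<le> k (\<epsilon>/2) + ereal (\<eta> / \<epsilon>)"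
      unfolding k_def g_def by (rule limsup_le_shift[OF ev]) (use lim in simp)
    then show "g \<epsilon> \<le> k (\<epsilon>/2) + ereal \<delta>" using e by (simp add: \<eta>_def)
  qed
  have limg: "(g \<longlongrightarrow> (SUP x\<in>{0<..<1}. g x)) (at_right 0)" by (rule anti_lim) (rule antig)
  have limk: "(k \<longlongrightarrow> (SUP x\<in>{0<..<1}. k x)) (at_right 0)" by (rule anti_lim) (rule antik)
  have eqS: "(SUP x\<in>{0<..<1}. g x) = (SUP x\<in>{0<..<1}. k x)"
  proof (rule antisym)
    show "(SUP x\<in>{0<..<1}. g x) \<le> (SUP x\<in>{0<..<1}. k x)"
    proof (rule SUP_least)
      fix x :: real assume x: "x \<in> {0<..<1}"
      then have "g x \<le> k (x/2)" by (intro gle) auto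
      also have "\<dots> \<le> (SUP x\<in>{0<..<1}. k x)" using x by (intro SUP_upper) auto
      finally show "g x \<le> (SUP x\<in>{0<..<1}. k x)" .
    qed
    show "(SUP x\<in>{0<..<1}. k x) \<le> (SUP x\<in>{0<..<1}. g x)"
    proof (rule SUP_least)
      fix x :: real assume x: "x \<in> {0<..<1}"
      then have "k x \<le> g (am * x / 2)" by (intro kle) auto
      also have "\<dots> \<le> (SUP x\<in>{0<..<1}. g x)"
      proof (intro SUP_upper)
        have "am * x \<le> 1 * 1" using x am1 a12 a2 am0 by (intro mult_mono) auto
        then show "am * x / 2 \<in> {0<..<1}" using x am0 by auto
      qed
      finally show "k x \<le> (SUP x\<in>{0<..<1}. g x)" .
    qed
  qed
  have "Hs P = Lim (at_right 0) g"
    unfolding Hs_def g_def L_def ..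
  also have "\<dots> = (SUP x\<in>{0<..<1}. g x)" by (rule tendsto_Lim[OF _ limg]) simp
  also have "\<dots> = (SUP x\<in>{0<..<1}. k x)" by (rule eqS)
  also have "\<dots> = Lim (at_right 0) k" by (rule tendsto_Lim[OF _ limk, symmetric]) simp
  finally show ?thesis unfolding k_def M_def .
qed

end
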